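(* Let $n\ge 0$ and $h\ge 1$ be integers. The number $sc_h(\mathcal{D}_n)$ of saturated chains of length $h$ in the Dyck lattice $\mathcal{D}_n$ is $$ sc_h(\mathcal{D}_n)=\sum_{\gamma\in\mathcal{D}_n}\ \sum_{\lambda=(\lambda_1,\ldots,\lambda_k)\vdash h}\ \sum_{\substack{\gamma_1,\ldots,\gamma_k \text{ p.d.o. in } \gamma\\ (\forall i)(\exists \varphi_i\in SkFS(\lambda_i))\ b(\varphi_i)=\gamma_i}}\ \sum_{\substack{(\varphi_1,\ldots,\varphi_k)\in SkFS^k\\ (\forall i)\ (b(\varphi_i)=\gamma_i,\ A(\varphi_i)=\lambda_i)}} \binom{h}{A(\varphi_1),\ldots,A(\varphi_k)}\, t(\varphi_1)\cdots t(\varphi_k), $$ where $\binom{h}{a_1,\ldots,a_k}=\frac{h!}{a_1!\cdots a_k!}$ is the multinomial coefficient.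
   Context: A Dyck path of semilength $n$ is a lattice path from $(0,0)$ to $(2n,0)$ with steps $u=(1,1)$ and $d=(1,-1)$ never going below the $x$-axis; it is identified with a word over $\{u,d\}$. $\mathcal{D}_n$ denotes the set of Dyck paths of semilength $n$ partially ordered by containment: $\gamma\le\gamma'$ iff $\gamma$ lies weakly below $\gamma'$ in the plane. A saturated chain of length $h$ is a sequence $\gamma^{(0)}<\gamma^{(1)}<\cdots<\gamma^{(h)}$ in which each $\gamma^{(i+1)}$ covers $\gamma^{(i)}$. $\lambda\vdash h$ means $\lambda=(\lambda_1\ge\cdots\ge\lambda_k)$ is an integer partition of $h$. A skew Ferrers shape is a shape $\lambda/\mu$ (a Ferrers diagram with a Ferrers diagram removed from its top-left corner) that is strongly connected: every two consecutive rows share at least one column and every two consecutive columns share at least one row. $SkFS$ is the set of skew Ferrers shapes, $A(\varphi)$ is the number of cells of $\varphi$, and $SkFS(m)=\{\varphi\in SkFS: A(\varphi)=m\}$. A skew Ferrers shape is delimited by two lattice paths from its bottom-left corner to its top-right corner; encoding each horizontal unit step by $d$ and each vertical unit step by $u$, the one of these two words starting with $d$ is the lower border $b(\varphi)$. (Equivalently, after rotating by $45^\circ$, the region between two Dyck-type path segments with common endpoints is a skew Ferrers shape whose lower border is the factor of the lower path.) A skew Young tableau of shape $\varphi$ is a bijective filling of the cells of $\varphi$ with $1,\ldots,A(\varphi)$ that is strictly decreasing along each row and each column; $t(\varphi)$ is the number of skew Young tableaux of shape $\varphi$. Words $\gamma_1,\ldots,\gamma_k$ over $\{u,d\}$ form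 a set of pairwise disjoint occurrences (p.d.o.) in $\gamma$ when they occur as factors of $\gamma$ at pairwise non-overlapping positions; the third sum runs over such sets of occurrences (each set counted once, so occurrences assigned to equal parts of $\lambda$ are unordered). *)

theory Defs
  imports Main "HOL-Library.Multiset" "HOL-Library.FuncSet"
begin

text \<open>Steps of lattice paths: U = u = (1,1) (vertical unit step of a shape border),
  D = d = (1,-1) (horizontal unit step of a shape border).\<close>
datatype step = U | D

definition cnt :: "step \<Rightarrow> step list \<Rightarrow> nat" where
  "cnt s w = length (filter (\<lambda>x. x = s) w)"

definition ht :: "step list \<Rightarrow> nat \<Rightarrow> int" where
  "ht w k = int (cnt U (take k w)) - int (cnt D (take k w))"

definition dyck :: "nat \<Rightarrow> step list set" where
  "dyck n = {w. length w = 2 * n \<and> (\<forall>k \<le> length w. ht w k \<ge> 0) \<and> ht w (length w) = 0}"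

definition dyck_le :: "step list \<Rightarrow> step list \<Rightarrow> bool" where
  "dyck_le w w' \<longleftrightarrow> (\<forall>k \<le> length w. ht w k \<le> ht w' k)"

definition dyck_covers :: "nat \<Rightarrow> step list \<Rightarrow> step list \<Rightarrow> bool" where
  "dyck_covers n a b \<longleftrightarrow> a \<in> dyck n \<and> b \<in> dyck n \<and> dyck_le a b \<and> a \<noteq> b \<and>
     \<not> (\<exists>c \<in> dyck n. dyck_le a c \<and> dyck_le c b \<and> c \<noteq> a \<and> c \<noteq> b)"

definition sat_chains :: "nat \<Rightarrow> nat \<Rightarrow> step list list set" where
  "sat_chains n h = {cs. length cs = h + 1 \<and> set cs \<subseteq> dyck n \<and>
     (\<forall>i < h. dyck_covers n (cs ! i) (cs ! Suc i))}"

definition sc :: "nat \<Rightarrow> nat \<Rightarrow> nat" where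
  "sc h n = card (sat_chains n h)"

definition partitions :: "nat \<Rightarrow> nat list set" where
  "partitions h = {ls. sum_list ls = h \<and> sorted_wrt (\<ge>) ls \<and> 0 \<notin> set ls}"

text \<open>Skew Ferrers shapes (up to translation) are represented by the pair (P, Q) of
  their two border paths from the bottom-left corner to the top-right corner
  (D = horizontal unit step, U = vertical unit step): P (the lower border) starts with D,
  Q starts with U, they have the same end point, and P lies strictly below Q
  at every interior point; the latter encodes strong connectedness.\<close>
definition SkFS :: "(step list \<times> step list) set" where
  "SkFS = {(P, Q). length P = length Q \<and> cnt D P = cnt D Q \<and>
     P \<noteq> [] \<and> Q \<noteq> [] \<and> hd P = D \<and> hd Q = U \<and>
     (\<forall>k. 0 < k \<and> k < length P \<longrightarrow> cnt D (take k P) > cnt D (take k Q))}"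

definition lower_border :: "step list \<times> step list \<Rightarrow> step list" where
  "lower_border \<phi> = fst \<phi>"

text \<open>Height of a border path along column x (number of vertical steps before
  its (x+1)-th horizontal step).\<close>
definition col_ht :: "step list \<Rightarrow> nat \<Rightarrow> nat" where
  "col_ht w x = card {i. i < length w \<and> w ! i = U \<and> cnt D (take i w) \<le> x}"

text \<open>Cells (x, y) (lower-left corners of unit squares; y grows upwards)
  lying between the two borders.\<close>
definition cells :: "step list \<times> step list \<Rightarrow> (nat \<times> nat) set" where
  "cells \<phi> = {(x, y). x < cnt D (fst \<phi>) \<and> col_ht (fst \<phi>) x \<le> y \<and> y < col_ht (snd \<phi>) x}"

definition area :: "step list \<times> step list \<Rightarrow> nat" where
  "area \<phi> = card (cells \<phi>)"

definition tableaux :: "step list \<times> step list \<Rightarrow> (nat \<times> nat \<Rightarrow> nat) set" where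
  "tableaux \<phi> = {T. bij_betw T (cells \<phi>) {1..area \<phi>} \<and>
     (\<forall>c. c \<notin> cells \<phi> \<longrightarrow> T c = 0) \<and>
     (\<forall>x x' y. (x, y) \<in> cells \<phi> \<and> (x', y) \<in> cells \<phi> \<and> x < x' \<longrightarrow> T (x, y) > T (x', y)) \<and>
     (\<forall>x y y'. (x, y) \<in> cells \<phi> \<and> (x, y') \<in> cells \<phi> \<and> y < y' \<longrightarrow> T (x, y') > T (x, y))}"

definition t :: "step list \<times> step list \<Rightarrow> nat" where
  "t \<phi> = card (tableaux \<phi>)"

definition factor :: "step list \<Rightarrow> nat \<Rightarrow> nat \<Rightarrow> step list" where
  "factor w p l = take l (drop p w)"

text \<open>Sets of pairwise disjoint occurrences in gamma assigned to the parts of lambda: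
  a triple (p, l, a) is the occurrence of the factor of length l at position p,
  assigned to a part equal to a.  Each set of occurrences is counted once (occurrences
  assigned to equal parts are unordered).\<close>
definition pdo :: "step list \<Rightarrow> nat list \<Rightarrow> (nat \<times> nat \<times> nat) set set" where
  "pdo \<gamma> lam = {Occ. finite Occ \<and>
     (\<forall>(p, l, a) \<in> Occ. p + l \<le> length \<gamma>) \<and>
     (\<forall>(p, l, a) \<in> Occ. \<forall>(p', l', a') \<in> Occ. (p, l, a) \<noteq> (p', l', a') \<longrightarrow> p + l \<le> p' \<or> p' + l' \<le> p) \<and>
     image_mset (\<lambda>(p, l, a). a) (mset_set Occ) = mset lam \<and>
     (\<forall>(p, l, a) \<in> Occ. \<exists>\<phi> \<in> SkFS. area \<phi> = a \<and> lower_border \<phi> = factor \<gamma> p l)}"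

definition multinomial :: "nat \<Rightarrow> ('i \<Rightarrow> nat) \<Rightarrow> 'i set \<Rightarrow> nat" where
  "multinomial h a I = fact h div (\<Prod>i\<in>I. fact (a i))"

end

theory Submission
  imports Defs
begin

definition linext :: "'a set \<Rightarrow> ('a \<Rightarrow> 'a \<Rightarrow> bool) \<Rightarrow> ('a \<Rightarrow> nat) set" where
 "linext S r = {f. bij_betw f S {1..card S} \<and> (\<forall>c. c \<notin> S \<longrightarrow> f c = 0) \<and>
     (\<forall>c\<in>S. \<forall>c'\<in>S. r c c' \<longrightarrow> f c < f c')}"

definition maxel :: "'a set \<Rightarrow> ('a \<Rightarrow> 'a \<Rightarrow> bool) \<Rightarrow> 'a set" where
 "maxel S r = {c\<in>S. \<not>(\<exists>c'\<in>S. r c c')}"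

lemma bij_upd_insert:
  assumes "bij_betw g A B" "c \<notin> A" "v \<notin> B"
  shows "bij_betw (g(c:=v)) (insert c A) (insert v B)"
proof -
  have "bij_betw (g(c:=v)) A B" using assms(1,2) by (metis bij_betw_cong fun_upd_other)
  thus ?thesis using assms unfolding bij_betw_def inj_on_def by auto
qed

lemma bij_remove:
  assumes "bij_betw f A B" "c \<in> A"
  shows "bij_betw f (A - {c}) (B - {f c})"
  using assms unfolding bij_betw_def inj_on_def by auto

lemma finite_linext: assumes "finite S" shows "finite (linext S r)"
proof -
  have "linext S r \<subseteq> {f. \<forall>x. (x \<in> S \<longrightarrow> f x \<in> {1..card S}) \<and> (x \<notin> S \<longrightarrow> f x = 0)}"
    unfolding linext_def bij_betw_def by auto
  moreover have "finite {f. \<forall>x. (x \<in> S \<longrightarrow> f x \<in> {1..card S}) \<and> (x \<notin> S \<longrightarrow> f x = (0::nat))}"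
    by (rule finite_set_of_finite_funs) (use assms in auto)
  ultimately show ?thesis by (rule finite_subset)
qed

lemma linext_empty: "linext {} r = {\<lambda>_. 0}"
  unfolding linext_def by (auto simp: bij_betw_def)

lemma card_linext_empty[simp]: "card (linext {} r) = 1"
  by (simp add: linext_empty)

lemma linext_rec:
  assumes fin: "finite S" and ne: "S \<noteq> {}"
  shows "card (linext S r) = (\<Sum>c\<in>maxel S r. card (linext (S - {c}) r))"
proof -
  let ?N = "card S"
  have Npos: "?N > 0" using fin ne by (simp add: card_gt_0_iff)
  define F where "F = (\<lambda>f. (inv_into S f ?N, f(inv_into S f ?N := 0)))"
  have "bij_betw F (linext S r) (SIGMA c:maxel S r. linext (S - {c}) r)"
  proof (rule bij_betw_byWitness[where f' = "\<lambda>(c,g). g(c := ?N)"])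
    show "\<forall>a\<in>linext S r. (\<lambda>(c, g). g(c := ?N)) (F a) = a"
    proof
      fix f assume f: "f \<in> linext S r"
      hence b: "bij_betw f S {1..?N}" by (simp add: linext_def)
      have "?N \<in> {1..?N}" using Npos by auto
      hence "f (inv_into S f ?N) = ?N" using b by (meson bij_betw_inv_into_right)
      thus "(\<lambda>(c, g). g(c := ?N)) (F f) = f" by (auto simp: F_def)
    qed
    show "\<forall>a'\<in>(SIGMA c:maxel S r. linext (S - {c}) r). F ((\<lambda>(c, g). g(c := ?N)) a') = a'"
    proof
      fix a' assume "a' \<in> (SIGMA c:maxel S r. linext (S - {c}) r)"
      then obtain c g where a': "a' = (c,g)" and c: "c \<in> maxel S r" and g: "g \<in> linext (S - {c}) r"
        by auto
      have cS: "c \<in> S" using c by (simp add: maxel_def)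
      have gc: "g c = 0" using g by (simp add: linext_def)
      have bg: "bij_betw g (S - {c}) {1..card (S - {c})}" using g by (simp add: linext_def)
      have inj: "inj_on (g(c := ?N)) S"
      proof -
        have "?N \<notin> {1..card (S - {c})}" using cS fin Npos by simp
        hence "bij_betw (g(c := ?N)) (insert c (S - {c})) (insert ?N {1..card (S - {c})})"
          using bij_upd_insert[OF bg, of c "?N"] by blast
        moreover have "insert c (S - {c}) = S" using cS by auto
        ultimately show ?thesis by (simp add: bij_betw_def)
      qed
      have "inv_into S (g(c := ?N)) ?N = c"
        using inv_into_f_f[OF inj cS] by simp
      thus "F ((\<lambda>(c, g). g(c := ?N)) a') = a'" using a' gc by (auto simp: F_def)
    qed
    show "F ` linext S r \<subseteq> (SIGMA c:maxel S r. linext (S - {c}) r)"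
    proof
      fix y assume "y \<in> F ` linext S r"
      then obtain f where f: "f \<in> linext S r" and y: "y = F f" by auto
      have b: "bij_betw f S {1..?N}" and z: "\<forall>c. c \<notin> S \<longrightarrow> f c = 0"
        and o: "\<forall>c\<in>S. \<forall>c'\<in>S. r c c' \<longrightarrow> f c < f c'" using f by (auto simp: linext_def)
      define c where "c = inv_into S f ?N"
      have NN: "?N \<in> {1..?N}" using Npos by auto
      have cS: "c \<in> S" unfolding c_def using b NN by (metis bij_betw_def inv_into_into)
      have fc: "f c = ?N" unfolding c_def using b NN by (meson bij_betw_inv_into_right)
      have "c \<in> maxel S r"
      proof -
        have "\<forall>c'\<in>S. f c' \<le> ?N" using b by (auto simp: bij_betw_def)
        hence "\<not>(\<exists>c'\<in>S. r c c')" using o fc cS by fastforce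
        thus ?thesis using cS by (simp add: maxel_def)
      qed
      moreover have "f(c := 0) \<in> linext (S - {c}) r"
      proof -
        have "bij_betw f (S - {c}) ({1..?N} - {?N})"
          using bij_remove[OF b cS] fc by simp
        moreover have "{1..?N} - {?N} = {1..card (S - {c})}" using cS fin Npos by auto
        ultimately have "bij_betw (f(c := 0)) (S - {c}) {1..card (S - {c})}"
          using bij_betw_cong[of "S - {c}" "f(c:=0)" f] by simp
        thus ?thesis using z o by (auto simp: linext_def)
      qed
      ultimately show "y \<in> (SIGMA c:maxel S r. linext (S - {c}) r)"
        using y by (simp add: F_def c_def)
    qed
    show "(\<lambda>(c, g). g(c := ?N)) ` (SIGMA c:maxel S r. linext (S - {c}) r) \<subseteq> linext S r"
    proof
      fix y assume "y \<in> (\<lambda>(c, g). g(c := ?N)) ` (SIGMA c:maxel S r. linext (S - {c}) r)"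
      then obtain c g where y: "y = g(c := ?N)" and c: "c \<in> maxel S r" and g: "g \<in> linext (S - {c}) r"
        by auto
      have cS: "c \<in> S" and cm: "\<forall>c'\<in>S. \<not> r c c'" using c by (auto simp: maxel_def)
      have bg: "bij_betw g (S - {c}) {1..card (S - {c})}" and zg: "\<forall>x. x \<notin> S - {c} \<longrightarrow> g x = 0"
        and og: "\<forall>x\<in>S-{c}. \<forall>x'\<in>S-{c}. r x x' \<longrightarrow> g x < g x'"
        using g by (auto simp: linext_def)
      have cd: "card (S - {c}) = ?N - 1" using cS fin by simp
      have "bij_betw (g(c := ?N)) (insert c (S - {c})) (insert ?N {1..?N - 1})"
        using bij_upd_insert[OF bg, of c "?N"] cd Npos by simp
      moreover have "insert c (S - {c}) = S" using cS by auto
      moreover have "insert ?N {1..?N - 1} = {1..?N}" using Npos by auto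
      ultimately have "bij_betw y S {1..?N}" using y by simp
      moreover have "\<forall>x. x \<notin> S \<longrightarrow> y x = 0" using zg y cS by auto
      moreover have "\<forall>x\<in>S. \<forall>x'\<in>S. r x x' \<longrightarrow> y x < y x'"
      proof (intro ballI impI)
        fix x x' assume x: "x \<in> S" and x': "x' \<in> S" and rx: "r x x'"
        have "x \<noteq> c" using cm x' rx by auto
        show "y x < y x'"
        proof (cases "x' = c")
          case True
          have "g x \<le> card (S - {c})" using bg x \<open>x \<noteq> c\<close> by (auto simp: bij_betw_def)
          thus ?thesis using True y cd Npos \<open>x \<noteq> c\<close> by auto
        next
          case False thus ?thesis using og x x' rx \<open>x \<noteq> c\<close> y by auto
        qed
      qed
      ultimately show "y \<in> linext S r" by (simp add: linext_def)
    qed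
  qed
  hence "card (linext S r) = card (SIGMA c:maxel S r. linext (S - {c}) r)"
    by (rule bij_betw_same_card)
  also have "\<dots> = (\<Sum>c\<in>maxel S r. card (linext (S - {c}) r))"
    by (rule card_SigmaI) (auto simp: maxel_def fin finite_linext)
  finally show ?thesis .
qed


lemma maxel_union:
  assumes "\<forall>a\<in>A. \<forall>b\<in>B. \<not> r a b \<and> \<not> r b a"
  shows "maxel (A \<union> B) r = maxel A r \<union> maxel B r"
  using assms unfolding maxel_def by blast

lemma linext_union:
  assumes "finite A" "finite B" "A \<inter> B = {}" "\<forall>a\<in>A. \<forall>b\<in>B. \<not> r a b \<and> \<not> r b a"
  shows "card (linext (A \<union> B) r) = (card A + card B choose card A) * card (linext A r) * card (linext B r)"
  using assms
proof (induction "card A + card B" arbitrary: A B rule: less_induct)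
  case less
  show ?case
  proof (cases "A = {}")
    case True thus ?thesis by simp
  next
    case Ane: False
    show ?thesis
    proof (cases "B = {}")
      case True thus ?thesis by simp
    next
      case Bne: False
      have fA: "finite A" and fB: "finite B" using less by auto
      obtain a' where a': "card A = Suc a'" using Ane fA by (metis card_gt_0_iff gr0_implies_Suc)
      have bpos: "card B > 0" using Bne fB by (simp add: card_gt_0_iff)
      let ?a = "card A" and ?b = "card B"
      have disj: "maxel A r \<inter> maxel B r = {}" using less(4) by (auto simp: maxel_def)
      have "card (linext (A \<union> B) r) = (\<Sum>c\<in>maxel (A \<union> B) r. card (linext (A \<union> B - {c}) r))"
        using linext_rec[of "A \<union> B" r] fA fB Ane by simp
      also have "\<dots> = (\<Sum>c\<in>maxel A r. card (linext (A \<union> B - {c}) r)) + (\<Sum>c\<in>maxel B r. card (linext (A \<union> B - {c}) r))"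
        unfolding maxel_union[OF less(5)]
        by (rule sum.union_disjoint) (use fA fB disj in \<open>auto simp: maxel_def\<close>)
      also have "(\<Sum>c\<in>maxel A r. card (linext (A \<union> B - {c}) r)) =
          (\<Sum>c\<in>maxel A r. (a' + ?b choose a') * card (linext (A - {c}) r) * card (linext B r))"
      proof (rule sum.cong[OF refl])
        fix c assume c: "c \<in> maxel A r"
        hence cA: "c \<in> A" by (simp add: maxel_def)
        have e: "A \<union> B - {c} = (A - {c}) \<union> B" using cA less(4) by auto
        have ca: "card (A - {c}) = a'" using cA a' fA by simp
        show "card (linext (A \<union> B - {c}) r) = (a' + ?b choose a') * card (linext (A - {c}) r) * card (linext B r)"
          unfolding e using less(1)[of "A - {c}" B] less(2-5) ca a' by auto
      qed
      also have "\<dots> = (a' + ?b choose a') * card (linext B r) * (\<Sum>c\<in>maxel A r. card (linext (A - {c}) r))"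
        by (simp add: sum_distrib_left mult_ac)
      also have "(\<Sum>c\<in>maxel A r. card (linext (A - {c}) r)) = card (linext A r)"
        using linext_rec[of A r] fA Ane by simp
      also have "(\<Sum>c\<in>maxel B r. card (linext (A \<union> B - {c}) r)) =
          (\<Sum>c\<in>maxel B r. (?a + (?b - 1) choose ?a) * card (linext A r) * card (linext (B - {c}) r))"
      proof (rule sum.cong[OF refl])
        fix c assume c: "c \<in> maxel B r"
        hence cB: "c \<in> B" by (simp add: maxel_def)
        have e: "A \<union> B - {c} = A \<union> (B - {c})" using cB less(4) by auto
        have cb: "card (B - {c}) = ?b - 1" using cB fB by simp
        have lt: "card A + card (B - {c}) < card A + card B" using cb bpos by simp
        show "card (linext (A \<union> B - {c}) r) = (?a + (?b - 1) choose ?a) * card (linext A r) * card (linext (B - {c}) r)"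
          unfolding e using less(1)[OF lt, of ] less(2-5) cb by auto
      qed
      also have "\<dots> = (?a + (?b - 1) choose ?a) * card (linext A r) * (\<Sum>c\<in>maxel B r. card (linext (B - {c}) r))"
        by (simp add: sum_distrib_left mult_ac)
      also have "(\<Sum>c\<in>maxel B r. card (linext (B - {c}) r)) = card (linext B r)"
        using linext_rec[of B r] fB Bne by simp
      finally have "card (linext (A \<union> B) r) = ((a' + ?b choose a') + (Suc a' + (?b - 1) choose Suc a')) * card (linext A r) * card (linext B r)"
        using a' by (simp add: algebra_simps)
      also have "(a' + ?b choose a') + (Suc a' + (?b - 1) choose Suc a') = (?a + ?b choose ?a)"
        using a' bpos by (cases ?b) simp_all
      finally show ?thesis .
    qed
  qed
qed

lemma linext_family_mult:
  assumes "finite I" "\<forall>i\<in>I. finite (S i)"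
    "\<forall>i\<in>I. \<forall>j\<in>I. i \<noteq> j \<longrightarrow> S i \<inter> S j = {}"
    "\<forall>i\<in>I. \<forall>j\<in>I. i \<noteq> j \<longrightarrow> (\<forall>a\<in>S i. \<forall>b\<in>S j. \<not> r a b)"
  shows "card (linext (\<Union>i\<in>I. S i) r) * (\<Prod>i\<in>I. fact (card (S i))) =
         fact (\<Sum>i\<in>I. card (S i)) * (\<Prod>i\<in>I. card (linext (S i) r))"
  using assms
proof (induction I rule: finite_induct)
  case empty thus ?case by simp
next
  case (insert j I)
  let ?R = "\<Union>i\<in>I. S i"
  have fR: "finite ?R" using insert by auto
  have fj: "finite (S j)" using insert by auto
  have cR: "card ?R = (\<Sum>i\<in>I. card (S i))"
    by (rule card_UN_disjoint) (use insert in auto)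
  have dj: "S j \<inter> ?R = {}" using insert(2,5) by fastforce
  have nr: "\<forall>a\<in>S j. \<forall>b\<in>?R. \<not> r a b \<and> \<not> r b a" using insert(2,6) by fastforce
  have IH: "card (linext ?R r) * (\<Prod>i\<in>I. fact (card (S i))) =
         fact (\<Sum>i\<in>I. card (S i)) * (\<Prod>i\<in>I. card (linext (S i) r))"
    using insert by auto
  let ?s = "card (S j)" and ?t = "\<Sum>i\<in>I. card (S i)"
  have "card (linext (\<Union>i\<in>insert j I. S i) r) = (?s + ?t choose ?s) * card (linext (S j) r) * card (linext ?R r)"
    using linext_union[OF fj fR dj nr] cR by simp
  hence "card (linext (\<Union>i\<in>insert j I. S i) r) * (\<Prod>i\<in>insert j I. fact (card (S i))) =
     (?s + ?t choose ?s) * fact ?s * card (linext (S j) r) * (card (linext ?R r) * (\<Prod>i\<in>I. fact (card (S i))))"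
    using insert by (simp add: mult_ac)
  also have "\<dots> = (?s + ?t choose ?s) * fact ?s * fact ?t * card (linext (S j) r) * (\<Prod>i\<in>I. card (linext (S i) r))"
    unfolding IH by (simp add: mult_ac)
  also have "(?s + ?t choose ?s) * fact ?s * fact ?t = fact (?s + ?t)"
    using binomial_fact_lemma[of ?s "?s + ?t"] by (simp add: mult_ac)
  finally show ?case using insert by (simp add: mult_ac)
qed

lemma prod_fact_dvd: "finite I \<Longrightarrow> (\<Prod>i\<in>I. fact (a i)) dvd (fact (\<Sum>i\<in>I. a i) :: nat)"
proof (induction I rule: finite_induct)
  case empty thus ?case by simp
next
  case (insert j I)
  have "fact (a j) * (\<Prod>i\<in>I. fact (a i)) dvd fact (a j) * (fact (\<Sum>i\<in>I. a i) :: nat)"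
    using insert(3) by (rule mult_dvd_mono[OF dvd_refl])
  also have "\<dots> dvd fact (a j + (\<Sum>i\<in>I. a i))" by (rule fact_fact_dvd_fact)
  finally show ?case using insert by simp
qed

lemma linext_family:
  assumes "finite I" "\<forall>i\<in>I. finite (S i)"
    "\<forall>i\<in>I. \<forall>j\<in>I. i \<noteq> j \<longrightarrow> S i \<inter> S j = {}"
    "\<forall>i\<in>I. \<forall>j\<in>I. i \<noteq> j \<longrightarrow> (\<forall>a\<in>S i. \<forall>b\<in>S j. \<not> r a b)"
  shows "card (linext (\<Union>i\<in>I. S i) r) =
         multinomial (\<Sum>i\<in>I. card (S i)) (\<lambda>i. card (S i)) I * (\<Prod>i\<in>I. card (linext (S i) r))"
proof -
  let ?P = "\<Prod>i\<in>I. fact (card (S i)) :: nat" and ?F = "fact (\<Sum>i\<in>I. card (S i)) :: nat"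
  have eq: "card (linext (\<Union>i\<in>I. S i) r) * ?P = ?F * (\<Prod>i\<in>I. card (linext (S i) r))"
    by (rule linext_family_mult[OF assms])
  have dv: "?P dvd ?F" by (rule prod_fact_dvd[OF assms(1)])
  have Ppos: "?P > 0" by (rule prod_pos) simp
  let ?Y = "\<Prod>i\<in>I. card (linext (S i) r)"
  have "(?F div ?P * ?Y) * ?P = (?F div ?P * ?P) * ?Y" by (simp only: mult.assoc mult.commute[of ?Y ?P])
  also have "?F div ?P * ?P = ?F" using dv by (rule dvd_div_mult_self)
  finally have A: "(?F div ?P * ?Y) * ?P = ?F * ?Y" .
  have "card (linext (\<Union>i\<in>I. S i) r) * ?P = (?F div ?P * ?Y) * ?P" unfolding A by (rule eq)
  hence "card (linext (\<Union>i\<in>I. S i) r) = ?F div ?P * ?Y"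
    using Ppos by (metis mult_right_cancel not_less0 mult_0_right)
  thus ?thesis by (simp add: multinomial_def)
qed

lemma linext_iso:
  assumes g: "bij_betw g S S'" and rel: "\<forall>c\<in>S. \<forall>c'\<in>S. r c c' \<longleftrightarrow> r' (g c) (g c')"
  shows "card (linext S r) = card (linext S' r')"
proof -
  have cs: "card S = card S'" using g by (rule bij_betw_same_card)
  let ?gi = "inv_into S g"
  have gi: "bij_betw ?gi S' S" using g by (rule bij_betw_inv_into)
  have gg: "\<And>d. d \<in> S' \<Longrightarrow> g (?gi d) = d" using g by (meson bij_betw_inv_into_right)
  have gg2: "\<And>c. c \<in> S \<Longrightarrow> ?gi (g c) = c" using g by (meson bij_betw_inv_into_left)
  have giS: "\<And>d. d \<in> S' \<Longrightarrow> ?gi d \<in> S" using gi by (meson bij_betwE)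
  have gS: "\<And>c. c \<in> S \<Longrightarrow> g c \<in> S'" using g by (meson bij_betwE)
  show ?thesis
  proof (rule bij_betw_same_card[of "\<lambda>f d. if d \<in> S' then f (?gi d) else 0"],
         rule bij_betw_byWitness[where f' = "\<lambda>f c. if c \<in> S then f (g c) else 0"])
    show "\<forall>a\<in>linext S r. (\<lambda>f c. if c \<in> S then f (g c) else 0) ((\<lambda>f d. if d \<in> S' then f (?gi d) else 0) a) = a"
      using gS gg2 by (auto simp: linext_def fun_eq_iff)
    show "\<forall>a'\<in>linext S' r'. (\<lambda>f d. if d \<in> S' then f (?gi d) else 0) ((\<lambda>f c. if c \<in> S then f (g c) else 0) a') = a'"
      using giS gg by (auto simp: linext_def fun_eq_iff)
    show "(\<lambda>f d. if d \<in> S' then f (?gi d) else 0) ` linext S r \<subseteq> linext S' r'"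
    proof
      fix y assume "y \<in> (\<lambda>f d. if d \<in> S' then f (?gi d) else 0) ` linext S r"
      then obtain f where f: "f \<in> linext S r" and y: "y = (\<lambda>d. if d \<in> S' then f (?gi d) else 0)" by auto
      have bf: "bij_betw f S {1..card S}" using f by (simp add: linext_def)
      have "bij_betw (f \<circ> ?gi) S' {1..card S}" by (rule bij_betw_trans[OF gi bf])
      hence "bij_betw y S' {1..card S'}" using cs bij_betw_cong[of S' y "f \<circ> ?gi"] unfolding y
        by simp
      moreover have "\<forall>c\<in>S'. \<forall>c'\<in>S'. r' c c' \<longrightarrow> y c < y c'"
      proof (intro ballI impI)
        fix c c' assume c: "c \<in> S'" and c': "c' \<in> S'" and rr: "r' c c'"
        have "r (?gi c) (?gi c')" using rel giS[OF c] giS[OF c'] gg[OF c] gg[OF c'] rr by metis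
        thus "y c < y c'" using f giS[OF c] giS[OF c'] c c' y by (auto simp: linext_def)
      qed
      ultimately show "y \<in> linext S' r'" using y by (auto simp: linext_def)
    qed
    show "(\<lambda>f c. if c \<in> S then f (g c) else 0) ` linext S' r' \<subseteq> linext S r"
    proof
      fix y assume "y \<in> (\<lambda>f c. if c \<in> S then f (g c) else 0) ` linext S' r'"
      then obtain f where f: "f \<in> linext S' r'" and y: "y = (\<lambda>c. if c \<in> S then f (g c) else 0)" by auto
      have bf: "bij_betw f S' {1..card S'}" using f by (simp add: linext_def)
      have "bij_betw (f \<circ> g) S {1..card S'}" by (rule bij_betw_trans[OF g bf])
      hence "bij_betw y S {1..card S}" using cs bij_betw_cong[of S y "f \<circ> g"] unfolding y
        by simp
      moreover have "\<forall>c\<in>S. \<forall>c'\<in>S. r c c' \<longrightarrow> y c < y c'"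
        using rel f gS y by (auto simp: linext_def)
      ultimately show "y \<in> linext S r" using y by (auto simp: linext_def)
    qed
  qed
qed

lemma linext_trancl_sub:
  assumes "\<And>c c'. c \<in> S \<Longrightarrow> c' \<in> S \<Longrightarrow> r' c c' \<Longrightarrow> (\<lambda>x y. x \<in> S \<and> y \<in> S \<and> r x y)\<^sup>+\<^sup>+ c c'"
  shows "linext S r \<subseteq> linext S r'"
proof
  fix f assume f: "f \<in> linext S r"
  have o: "\<forall>c\<in>S. \<forall>c'\<in>S. r c c' \<longrightarrow> f c < f c'" using f by (simp add: linext_def)
  have tr: "f c < f c'" if "(\<lambda>x y. x \<in> S \<and> y \<in> S \<and> r x y)\<^sup>+\<^sup>+ c c'" for c c'
    using that by (induction rule: tranclp_induct) (use o in fastforce)+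
  show "f \<in> linext S r'" using f assms tr by (auto simp: linext_def)
qed


fun stepv :: "step \<Rightarrow> int" where "stepv U = 1" | "stepv D = -1"

lemma cnt_Nil[simp]: "cnt s [] = 0" by (simp add: cnt_def)
lemma cnt_Cons[simp]: "cnt s (x # w) = (if x = s then 1 else 0) + cnt s w" by (simp add: cnt_def)
lemma cnt_append[simp]: "cnt s (v @ w) = cnt s v + cnt s w" by (simp add: cnt_def)
lemma cnt_UD: "cnt U w + cnt D w = length w"
  by (induction w) (auto split: step.splits, metis step.exhaust)+

lemma cnt_le: "cnt s w \<le> length w" by (simp add: cnt_def)

lemma ht_0[simp]: "ht w 0 = 0" by (simp add: ht_def)

lemma ht_Suc: "k < length w \<Longrightarrow> ht w (Suc k) = ht w k + stepv (w ! k)"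
  by (cases "w ! k") (auto simp: ht_def take_Suc_conv_app_nth)

lemma ht_beyond: "length w \<le> k \<Longrightarrow> ht w k = ht w (length w)"
  by (simp add: ht_def)

lemma ht_alt2: "ht w k = int (min k (length w)) - 2 * int (cnt D (take k w))"
proof -
  have e: "cnt U (take k w) + cnt D (take k w) = min k (length w)"
    using cnt_UD[of "take k w"] by (simp only: length_take min.commute)
  have "int (cnt U (take k w)) + int (cnt D (take k w)) = int (min k (length w))"
    using e by (metis of_nat_add)
  thus ?thesis unfolding ht_def by linarith
qed

lemma ht_alt: "k \<le> length w \<Longrightarrow> ht w k = int k - 2 * int (cnt D (take k w))"
  using ht_alt2[of w k] by (simp add: min_def)

lemma ht_parity: assumes "k \<le> length w" shows "even (ht w k + int k)"
proof -
  have "ht w k + int k = 2 * (int k - int (cnt D (take k w)))" using ht_alt[OF assms] by simp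
  thus ?thesis by simp
qed

lemma ht_step: "k < length w \<Longrightarrow> ht w (Suc k) = ht w k + 1 \<or> ht w (Suc k) = ht w k - 1"
  using ht_Suc[of k w] by (cases "w ! k") auto

lemma nth_from_ht: "k < length w \<Longrightarrow> w ! k = (if ht w (Suc k) > ht w k then U else D)"
  using ht_Suc[of k w] by (cases "w ! k") auto

lemma list_eq_ht:
  assumes "length a = length b" "\<forall>k\<le>length a. ht a k = ht b k"
  shows "a = b"
proof (rule nth_equalityI)
  show "length a = length b" by fact
  fix i assume i: "i < length a"
  have "ht a (Suc i) = ht b (Suc i)" "ht a i = ht b i" using assms i by auto
  thus "a ! i = b ! i" using assms i nth_from_ht[of i a] nth_from_ht[of i b] by simp
qed

lemma ht_factor:
  assumes "p + l \<le> length w" "k \<le> l"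
  shows "ht w (p + k) = ht w p + ht (factor w p l) k"
proof -
  have "take (p + k) w = take p w @ take k (drop p w)" by (simp add: take_add)
  moreover have "take k (factor w p l) = take k (drop p w)" using assms(2)
    by (simp add: factor_def min_def)
  ultimately show ?thesis by (simp add: ht_def)
qed

lemma length_factor: "p + l \<le> length w \<Longrightarrow> length (factor w p l) = l"
  by (simp add: factor_def)

lemma nth_factor: "p + l \<le> length w \<Longrightarrow> i < l \<Longrightarrow> factor w p l ! i = w ! (p + i)"
  by (simp add: factor_def)

definition flipdown :: "step list \<Rightarrow> nat \<Rightarrow> step list" where
  "flipdown w m = w[m - 1 := D, m := U]"

definition peak :: "step list \<Rightarrow> nat \<Rightarrow> bool" where
  "peak w m \<longleftrightarrow> 0 < m \<and> m < length w \<and> w ! (m - 1) = U \<and> w ! m = D"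

lemma length_flipdown[simp]: "length (flipdown w m) = length w"
  by (simp add: flipdown_def)

lemma ht_flipdown:
  assumes "peak w m" "k \<le> length w"
  shows "ht (flipdown w m) k = ht w k - (if k = m then 2 else 0)"
  using assms(2)
proof (induction k)
  case 0 thus ?case using assms(1) by (simp add: peak_def)
next
  case (Suc k)
  have k: "k < length w" using Suc by simp
  have IH: "ht (flipdown w m) k = ht w k - (if k = m then 2 else 0)" using Suc by simp
  have nth: "flipdown w m ! k = (if k = m then U else if k = m - 1 then D else w ! k)"
    using assms(1) k by (auto simp: flipdown_def peak_def nth_list_update)
  show ?case
    using ht_Suc[of k "flipdown w m"] ht_Suc[of k w] k IH nth assms(1)
    by (auto simp: peak_def)
qed

lemma peak_ht:
  assumes "peak w m"
  shows "ht w (m - 1) = ht w m - 1" "ht w (Suc m) = ht w m - 1"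
  using assms ht_Suc[of "m - 1" w] ht_Suc[of m w] by (auto simp: peak_def)

lemma peak_iff_ht:
  assumes "0 < m" "m < length w" "ht w (m - 1) = ht w m - 1" "ht w (Suc m) = ht w m - 1"
  shows "peak w m"
proof -
  have "w ! (m - 1) = U" using nth_from_ht[of "m - 1" w] assms by simp
  moreover have "w ! m = D" using nth_from_ht[of m w] assms by simp
  ultimately show ?thesis using assms by (simp add: peak_def)
qed

lemma dyck_length: "w \<in> dyck n \<Longrightarrow> length w = 2 * n" by (simp add: dyck_def)
lemma dyck_nonneg: assumes "w \<in> dyck n" shows "ht w k \<ge> 0"
proof (cases "k \<le> length w")
  case True thus ?thesis using assms by (simp add: dyck_def)
next
  case False
  hence "ht w k = ht w (length w)" using ht_beyond[of w k] by simp
  thus ?thesis using assms by (simp add: dyck_def)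
qed
lemma dyck_end: "w \<in> dyck n \<Longrightarrow> ht w (length w) = 0" unfolding dyck_def by blast

lemma flipdown_dyck:
  assumes "w \<in> dyck n" "peak w m" "ht w m \<ge> 2"
  shows "flipdown w m \<in> dyck n"
  using assms ht_flipdown[OF assms(2)] unfolding dyck_def
  by (auto simp: peak_def)

lemma flipdown_le: "peak w m \<Longrightarrow> dyck_le (flipdown w m) w"
  by (simp add: dyck_le_def ht_flipdown)

lemma flipdown_neq: assumes "peak w m" shows "flipdown w m \<noteq> w"
proof
  assume eq: "flipdown w m = w"
  have "m \<le> length w" using assms by (simp add: peak_def)
  hence "ht (flipdown w m) m = ht w m - 2" using ht_flipdown[OF assms] by simp
  thus False using eq by simp
qed

lemma par2: "even (a + k) \<Longrightarrow> even (b + k) \<Longrightarrow> b - 2 \<le> a \<Longrightarrow> a \<le> b \<Longrightarrow> a = b - 2 \<or> a = (b::int)"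
  by presburger

lemma flipdown_covers:
  assumes "w \<in> dyck n" "peak w m" "ht w m \<ge> 2"
  shows "dyck_covers n (flipdown w m) w"
proof -
  have m: "m < length w" using assms(2) by (simp add: peak_def)
  have H: "c = flipdown w m \<or> c = w" if c: "c \<in> dyck n" "dyck_le (flipdown w m) c" "dyck_le c w" for c
  proof -
    have lc: "length c = length w" using c(1) assms(1) by (simp add: dyck_def)
    have o: "\<forall>k\<le>length w. k \<noteq> m \<longrightarrow> ht c k = ht w k"
    proof (intro allI impI)
      fix k assume k: "k \<le> length w" "k \<noteq> m"
      have "ht (flipdown w m) k \<le> ht c k" using c(2) k by (simp add: dyck_le_def)
      moreover have "ht c k \<le> ht w k" using c(3) k lc by (simp add: dyck_le_def)
      ultimately show "ht c k = ht w k" using ht_flipdown[OF assms(2) k(1)] k by simp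
    qed
    have l1: "ht (flipdown w m) m \<le> ht c m" using c(2) m by (simp add: dyck_le_def)
    have lo: "ht w m - 2 \<le> ht c m" "ht c m \<le> ht w m"
      using l1 ht_flipdown[OF assms(2), of m] m apply simp
      using c(3) m lc by (simp add: dyck_le_def)
    have "even (ht c m + int m)" "even (ht w m + int m)"
      using m lc ht_parity[of m c] ht_parity[of m w] by auto
    hence "ht c m = ht w m - 2 \<or> ht c m = ht w m" using lo par2 by blast
    thus ?thesis
    proof
      assume h: "ht c m = ht w m - 2"
      have "\<forall>k\<le>length c. ht c k = ht (flipdown w m) k"
        using lc o h ht_flipdown[OF assms(2)] by auto
      thus ?thesis using list_eq_ht[of c "flipdown w m"] lc by simp
    next
      assume h: "ht c m = ht w m"
      have "\<forall>k\<le>length c. ht c k = ht w k" using lc o h by auto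
      thus ?thesis using list_eq_ht[of c w] lc by simp
    qed
  qed
  have nb: "\<not> (\<exists>c\<in>dyck n. dyck_le (flipdown w m) c \<and> dyck_le c w \<and> c \<noteq> flipdown w m \<and> c \<noteq> w)"
  proof
    assume "\<exists>c\<in>dyck n. dyck_le (flipdown w m) c \<and> dyck_le c w \<and> c \<noteq> flipdown w m \<and> c \<noteq> w"
    then obtain c where "c \<in> dyck n" "dyck_le (flipdown w m) c" "dyck_le c w" "c \<noteq> flipdown w m" "c \<noteq> w"
      by blast
    thus False using H by blast
  qed
  have a1: "flipdown w m \<in> dyck n" by (rule flipdown_dyck[OF assms])
  have a2: "dyck_le (flipdown w m) w" by (rule flipdown_le[OF assms(2)])
  have a3: "flipdown w m \<noteq> w" by (rule flipdown_neq[OF assms(2)])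
  show ?thesis unfolding dyck_covers_def using a1 a2 a3 nb assms(1) by (intro conjI)
qed

lemma covers_flipdown:
  assumes "dyck_covers n d w"
  shows "\<exists>m. peak w m \<and> ht w m \<ge> 2 \<and> d = flipdown w m"
proof -
  have d: "d \<in> dyck n" and w: "w \<in> dyck n" and le: "dyck_le d w" and ne: "d \<noteq> w"
    and nb: "\<not> (\<exists>c \<in> dyck n. dyck_le d c \<and> dyck_le c w \<and> c \<noteq> d \<and> c \<noteq> w)"
    using assms by (auto simp: dyck_covers_def)
  have ld: "length d = length w" using d w by (simp add: dyck_def)
  let ?N = "length w"
  have le': "\<forall>k\<le>?N. ht d k \<le> ht w k" using le ld by (simp add: dyck_le_def)
  let ?K = "{k. k \<le> ?N \<and> ht d k < ht w k}"
  have Kne: "?K \<noteq> {}"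
  proof
    assume "?K = {}"
    hence "\<forall>k\<le>length d. ht d k = ht w k" using le' ld by force
    thus False using list_eq_ht[OF ld] ne by simp
  qed
  have Kf: "finite ?K" by simp
  have "Max (ht w ` ?K) \<in> ht w ` ?K" using Kf Kne by (intro Max_in) auto
  then obtain m where mK: "m \<in> ?K" and mM: "ht w m = Max (ht w ` ?K)" by auto
  have mmax: "\<forall>k\<in>?K. ht w k \<le> ht w m" unfolding mM using Kf by auto
  have m0: "m \<noteq> 0" using mK by (cases "m = 0") auto
  have mN: "m \<noteq> ?N" using mK d w ld by (auto simp: dyck_def)
  hence mlt: "m < ?N" using mK by simp
  have next1: "ht w (Suc m) = ht w m - 1"
  proof (rule ccontr)
    assume "ht w (Suc m) \<noteq> ht w m - 1"
    hence up: "ht w (Suc m) = ht w m + 1" using ht_step[OF mlt] by auto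
    have "ht d (Suc m) \<le> ht d m + 1" using ht_step[of m d] mlt ld by auto
    hence "Suc m \<in> ?K" using mK up mlt by auto
    thus False using mmax up by fastforce
  qed
  have prev1: "ht w (m - 1) = ht w m - 1"
  proof (rule ccontr)
    assume "ht w (m - 1) \<noteq> ht w m - 1"
    have s: "Suc (m - 1) = m" using m0 by simp
    have "ht w m = ht w (m - 1) + 1 \<or> ht w m = ht w (m - 1) - 1" using ht_step[of "m - 1" w] mlt s by simp
    hence up: "ht w (m - 1) = ht w m + 1" using \<open>ht w (m - 1) \<noteq> ht w m - 1\<close> by auto
    have "ht d m = ht d (m - 1) + 1 \<or> ht d m = ht d (m - 1) - 1" using ht_step[of "m - 1" d] mlt s ld by simp
    hence "m - 1 \<in> ?K" using mK up by auto
    thus False using mmax up by fastforce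
  qed
  have pk: "peak w m" using peak_iff_ht[of m w] m0 mlt next1 prev1 by simp
  have par: "even (ht d m + int m)" "even (ht w m + int m)"
    using mlt ld ht_parity[of m d] ht_parity[of m w] by auto
  have lt: "ht d m < ht w m" using mK by simp
  have "ht d m \<le> ht w m - 2" using lt par by presburger
  hence h2: "ht w m \<ge> 2" using dyck_nonneg[OF d, of m] by simp
  let ?c = "flipdown w m"
  have cd: "?c \<in> dyck n" by (rule flipdown_dyck[OF w pk h2])
  have "dyck_le d ?c" unfolding dyck_le_def using le' ld ht_flipdown[OF pk] \<open>ht d m \<le> ht w m - 2\<close>
    by auto
  hence "?c = d" using nb cd flipdown_le[OF pk] flipdown_neq[OF pk] by blast
  thus ?thesis using pk h2 by blast
qed


lemma UNIV_step: "(UNIV :: step set) = {U, D}"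
  by (auto intro: step.exhaust)

lemma finite_dyck: "finite (dyck n)"
proof -
  have "dyck n \<subseteq> {w. set w \<subseteq> (UNIV :: step set) \<and> length w = 2 * n}" by (auto simp: dyck_def)
  moreover have "finite {w. set w \<subseteq> (UNIV :: step set) \<and> length w = 2 * n}"
    by (rule finite_lists_length_eq) (simp add: UNIV_step)
  ultimately show ?thesis by (rule finite_subset)
qed

definition chainsFT :: "nat \<Rightarrow> nat \<Rightarrow> step list \<Rightarrow> step list \<Rightarrow> step list list set" where
  "chainsFT n h g g' = {cs \<in> sat_chains n h. hd cs = g \<and> last cs = g'}"

lemma finite_sat_chains: "finite (sat_chains n h)"
proof -
  have "sat_chains n h \<subseteq> {cs. set cs \<subseteq> dyck n \<and> length cs = h + 1}" by (auto simp: sat_chains_def)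
  moreover have "finite {cs. set cs \<subseteq> dyck n \<and> length cs = h + 1}"
    by (rule finite_lists_length_eq) (rule finite_dyck)
  ultimately show ?thesis by (rule finite_subset)
qed

lemma sc_split: "sc h n = (\<Sum>g\<in>dyck n. \<Sum>g'\<in>dyck n. card (chainsFT n h g g'))"
proof -
  have eq: "sat_chains n h = (\<Union>g\<in>dyck n. \<Union>g'\<in>dyck n. chainsFT n h g g')"
  proof
    show "sat_chains n h \<subseteq> (\<Union>g\<in>dyck n. \<Union>g'\<in>dyck n. chainsFT n h g g')"
    proof
      fix cs assume cs: "cs \<in> sat_chains n h"
      hence ne: "cs \<noteq> []" and s: "set cs \<subseteq> dyck n" by (auto simp: sat_chains_def)
      hence "hd cs \<in> dyck n" "last cs \<in> dyck n" by auto
      thus "cs \<in> (\<Union>g\<in>dyck n. \<Union>g'\<in>dyck n. chainsFT n h g g')" using cs by (auto simp: chainsFT_def)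
    qed
  qed (auto simp: chainsFT_def)
  have fin': "finite {cs \<in> sat_chains n h. hd cs = g \<and> last cs = g'}" for g g'
    using finite_sat_chains by (rule finite_subset[rotated]) auto
  have fin: "finite (chainsFT n h g g')" for g g'
    using fin' by (simp add: chainsFT_def)
  have "sc h n = card (\<Union>g\<in>dyck n. \<Union>g'\<in>dyck n. chainsFT n h g g')" by (simp add: sc_def eq)
  also have "\<dots> = (\<Sum>g\<in>dyck n. card (\<Union>g'\<in>dyck n. chainsFT n h g g'))"
    by (rule card_UN_disjoint) (auto simp: finite_dyck fin fin' chainsFT_def)
  also have "\<dots> = (\<Sum>g\<in>dyck n. \<Sum>g'\<in>dyck n. card (chainsFT n h g g'))"
    by (rule sum.cong[OF refl], rule card_UN_disjoint) (auto simp: finite_dyck fin fin' chainsFT_def)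
  finally show ?thesis .
qed

lemma chainsFT_0: "chainsFT n 0 g g' = (if g = g' \<and> g \<in> dyck n then {[g]} else {})"
proof -
  have "cs \<in> chainsFT n 0 g g' \<longleftrightarrow> g = g' \<and> g \<in> dyck n \<and> cs = [g]" for cs
  proof
    assume "cs \<in> chainsFT n 0 g g'"
    hence "length cs = 1" "set cs \<subseteq> dyck n" "hd cs = g" "last cs = g'"
      by (auto simp: chainsFT_def sat_chains_def)
    thus "g = g' \<and> g \<in> dyck n \<and> cs = [g]"
      by (cases cs) auto
  qed (auto simp: chainsFT_def sat_chains_def)
  thus ?thesis by auto
qed

lemma chainsFT_Suc:
  assumes g': "g' \<in> dyck n"
  shows "card (chainsFT n (Suc h) g g') = (\<Sum>d\<in>{d\<in>dyck n. dyck_covers n d g'}. card (chainsFT n h g d))"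
proof -
  have "bij_betw (\<lambda>cs. (last (butlast cs), butlast cs)) (chainsFT n (Suc h) g g')
          (SIGMA d:{d\<in>dyck n. dyck_covers n d g'}. chainsFT n h g d)"
  proof (rule bij_betw_byWitness[where f' = "\<lambda>(d, cs). cs @ [g']"])
    show "\<forall>a\<in>chainsFT n (Suc h) g g'. (\<lambda>(d, cs). cs @ [g']) (last (butlast a), butlast a) = a"
      by (auto simp: chainsFT_def sat_chains_def intro!: append_butlast_last_id)
    show "\<forall>a'\<in>(SIGMA d:{d \<in> dyck n. dyck_covers n d g'}. chainsFT n h g d).
       (last (butlast ((\<lambda>(d, cs). cs @ [g']) a')), butlast ((\<lambda>(d, cs). cs @ [g']) a')) = a'"
      by (auto simp: chainsFT_def)
    show "(\<lambda>cs. (last (butlast cs), butlast cs)) ` chainsFT n (Suc h) g g'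
        \<subseteq> (SIGMA d:{d \<in> dyck n. dyck_covers n d g'}. chainsFT n h g d)"
    proof
      fix y assume "y \<in> (\<lambda>cs. (last (butlast cs), butlast cs)) ` chainsFT n (Suc h) g g'"
      then obtain cs where cs: "cs \<in> chainsFT n (Suc h) g g'" and y: "y = (last (butlast cs), butlast cs)" by auto
      have len: "length cs = Suc (Suc h)" and s: "set cs \<subseteq> dyck n"
        and cv: "\<forall>i<Suc h. dyck_covers n (cs ! i) (cs ! Suc i)"
        and hd: "hd cs = g" and la: "last cs = g'"
        using cs by (auto simp: chainsFT_def sat_chains_def)
      let ?b = "butlast cs"
      have lb: "length ?b = Suc h" using len by simp
      have nb: "\<And>i. i < Suc h \<Longrightarrow> ?b ! i = cs ! i" using len by (simp add: nth_butlast)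
      have bne: "?b \<noteq> []" using lb by (metis list.size(3) nat.distinct(1))
      have "last ?b = ?b ! (length ?b - 1)" by (rule last_conv_nth[OF bne])
      hence lastb: "last ?b = cs ! h" using lb nb len by simp
      have lastc: "last cs = cs ! Suc h" using len last_conv_nth[of cs] by (metis diff_Suc_1 list.size(3) nat.distinct(1))
      have "set ?b \<subseteq> dyck n" using s by (meson in_set_butlastD subset_iff)
      moreover have "\<forall>i<h. dyck_covers n (?b ! i) (?b ! Suc i)" using cv nb by simp
      moreover have "hd ?b = g" using hd len by (cases cs) (auto simp: butlast.simps)
      ultimately have "?b \<in> chainsFT n h g (last ?b)" using lb by (simp add: chainsFT_def sat_chains_def)
      moreover have "dyck_covers n (last ?b) g'" using cv lastb lastc la by simp
      moreover have "last ?b \<in> dyck n" using lastb s len by (simp add: subset_iff)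
      ultimately show "y \<in> (SIGMA d:{d \<in> dyck n. dyck_covers n d g'}. chainsFT n h g d)" using y by auto
    qed
    show "(\<lambda>(d, cs). cs @ [g']) ` (SIGMA d:{d \<in> dyck n. dyck_covers n d g'}. chainsFT n h g d)
        \<subseteq> chainsFT n (Suc h) g g'"
    proof
      fix y assume "y \<in> (\<lambda>(d, cs). cs @ [g']) ` (SIGMA d:{d \<in> dyck n. dyck_covers n d g'}. chainsFT n h g d)"
      then obtain d cs where y: "y = cs @ [g']" and d: "dyck_covers n d g'" and cs: "cs \<in> chainsFT n h g d"
        by auto
      have len: "length cs = Suc h" and s: "set cs \<subseteq> dyck n"
        and cv: "\<forall>i<h. dyck_covers n (cs ! i) (cs ! Suc i)"
        and hd: "hd cs = g" and la: "last cs = d"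
        using cs by (auto simp: chainsFT_def sat_chains_def)
      have "\<forall>i<Suc h. dyck_covers n (y ! i) (y ! Suc i)"
      proof (intro allI impI)
        fix i assume i: "i < Suc h"
        show "dyck_covers n (y ! i) (y ! Suc i)"
        proof (cases "i = h")
          case True
          have "y ! i = cs ! h" using True len y by (simp add: nth_append)
          moreover have "cs ! h = d" using la len last_conv_nth[of cs] by (metis diff_Suc_1 list.size(3) nat.distinct(1))
          moreover have "y ! Suc i = g'" using True len y by (simp add: nth_append)
          ultimately show ?thesis using d by simp
        next
          case False
          hence "i < h" using i by simp
          thus ?thesis using cv len y by (simp add: nth_append)
        qed
      qed
      moreover have "set y \<subseteq> dyck n" using s g' y by auto
      moreover have "hd y = g" using hd len y by (cases cs) auto
      ultimately show "y \<in> chainsFT n (Suc h) g g'" using len y by (simp add: chainsFT_def sat_chains_def)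
    qed
  qed
  hence "card (chainsFT n (Suc h) g g') = card (SIGMA d:{d\<in>dyck n. dyck_covers n d g'}. chainsFT n h g d)"
    by (rule bij_betw_same_card)
  also have "\<dots> = (\<Sum>d\<in>{d\<in>dyck n. dyck_covers n d g'}. card (chainsFT n h g d))"
  proof (rule card_SigmaI)
    show "finite {d \<in> dyck n. dyck_covers n d g'}" using finite_dyck by simp
    show "\<forall>a\<in>{d \<in> dyck n. dyck_covers n d g'}. finite (chainsFT n h g a)"
      using finite_sat_chains by (auto simp: chainsFT_def)
  qed
  finally show ?thesis .
qed


definition region :: "step list \<Rightarrow> step list \<Rightarrow> (nat \<times> int) set" where
  "region g g' = {(m, v). m \<le> length g \<and> ht g m \<le> v \<and> v < ht g' m \<and> even (v - ht g m)}"

fun rD :: "nat \<times> int \<Rightarrow> nat \<times> int \<Rightarrow> bool" where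
  "rD (m, v) (m', v') \<longleftrightarrow> (m' = Suc m \<or> Suc m' = m) \<and> v' = v + 1"

definition E :: "step list \<Rightarrow> step list \<Rightarrow> nat" where
  "E g g' = card (linext (region g g') rD)"

lemma finite_region: "finite (region g g')"
proof -
  have "region g g' \<subseteq> (SIGMA m:{..length g}. {ht g m..<ht g' m})" by (auto simp: region_def)
  moreover have "finite (SIGMA m:{..length g}. {ht g m..<ht g' m})" by auto
  ultimately show ?thesis by (rule finite_subset)
qed

lemma region_self: "region g g = {}" by (auto simp: region_def)

lemma region_empty_eq:
  assumes "length g = length g'" "dyck_le g g'" "region g g' = {}"
  shows "g = g'"
proof (rule list_eq_ht[OF assms(1)], intro allI impI)
  fix k assume k: "k \<le> length g"
  have le: "ht g k \<le> ht g' k" using assms(2) k by (simp add: dyck_le_def)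
  show "ht g k = ht g' k"
  proof (rule ccontr)
    assume "ht g k \<noteq> ht g' k"
    hence "(k, ht g k) \<in> region g g'" using le k by (auto simp: region_def)
    thus False using assms(3) by simp
  qed
qed

lemma dyck_same_length: "g \<in> dyck n \<Longrightarrow> g' \<in> dyck n \<Longrightarrow> length g = length g'"
  by (simp add: dyck_def)

lemma par_ge2: "even (a + k) \<Longrightarrow> even (b + k) \<Longrightarrow> a < b \<Longrightarrow> a \<le> b - (2::int)"
  by presburger

lemma par_even: "even (a + k) \<Longrightarrow> even (b + k) \<Longrightarrow> even (b - a :: int)"
  by presburger

lemma par_step: "even (v - x) \<Longrightarrow> y = x + 1 \<or> y = x - 1 \<Longrightarrow> even (v + 1 - (y::int))"
  by presburger

lemma le_flipdown_iff:
  assumes g: "g \<in> dyck n" and g': "g' \<in> dyck n" and pk: "peak g' m"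
  shows "dyck_le g (flipdown g' m) \<longleftrightarrow> dyck_le g g' \<and> ht g m < ht g' m"
proof -
  have l: "length g = length g'" by (rule dyck_same_length[OF g g'])
  have m: "m < length g'" using pk by (simp add: peak_def)
  have par: "even (ht g m + int m)" "even (ht g' m + int m)"
    using m l ht_parity[of m g] ht_parity[of m g'] by auto
  show ?thesis
  proof
    assume a: "dyck_le g (flipdown g' m)"
    have "\<forall>k\<le>length g. ht g k \<le> ht g' k"
    proof (intro allI impI)
      fix k assume k: "k \<le> length g"
      have "ht g k \<le> ht (flipdown g' m) k" using a k by (simp add: dyck_le_def)
      moreover have "ht (flipdown g' m) k \<le> ht g' k" using ht_flipdown[OF pk, of k] k l by simp
      ultimately show "ht g k \<le> ht g' k" by simp
    qed
    hence "dyck_le g g'" by (simp add: dyck_le_def)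
    moreover have "ht g m < ht g' m"
    proof -
      have "ht g m \<le> ht (flipdown g' m) m" using a m l by (simp add: dyck_le_def)
      thus ?thesis using ht_flipdown[OF pk, of m] m by simp
    qed
    ultimately show "dyck_le g g' \<and> ht g m < ht g' m" by simp
  next
    assume a: "dyck_le g g' \<and> ht g m < ht g' m"
    have "ht g m \<le> ht g' m - 2" using par_ge2[OF par] a by simp
    thus "dyck_le g (flipdown g' m)" using a ht_flipdown[OF pk] l unfolding dyck_le_def by auto
  qed
qed

lemma region_flipdown:
  assumes g: "g \<in> dyck n" and g': "g' \<in> dyck n" and pk: "peak g' m"
  shows "region g (flipdown g' m) = region g g' - {(m, ht g' m - 2)}"
proof -
  have l: "length g = length g'" by (rule dyck_same_length[OF g g'])
  have m: "m < length g'" using pk by (simp add: peak_def)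
  show ?thesis
  proof (intro set_eqI iffI)
    fix x assume x: "x \<in> region g (flipdown g' m)"
    obtain k v where kv: "x = (k, v)" by (cases x)
    have k: "k \<le> length g" and a: "ht g k \<le> v" "v < ht (flipdown g' m) k" "even (v - ht g k)"
      using x kv by (auto simp: region_def)
    have hf: "ht (flipdown g' m) k = ht g' k - (if k = m then 2 else 0)" using ht_flipdown[OF pk] k l by simp
    show "x \<in> region g g' - {(m, ht g' m - 2)}" using kv k a hf by (auto simp: region_def split: if_splits)
  next
    fix x assume x: "x \<in> region g g' - {(m, ht g' m - 2)}"
    obtain k v where kv: "x = (k, v)" by (cases x)
    have k: "k \<le> length g" and a: "ht g k \<le> v" "v < ht g' k" "even (v - ht g k)"
      and ne: "(k, v) \<noteq> (m, ht g' m - 2)"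
      using x kv by (auto simp: region_def)
    have hf: "ht (flipdown g' m) k = ht g' k - (if k = m then 2 else 0)" using ht_flipdown[OF pk] k l by simp
    have "v < ht (flipdown g' m) k"
    proof (cases "k = m")
      case True
      have par: "even (ht g k + int k)" "even (ht g' k + int k)"
        using k l ht_parity[of k g] ht_parity[of k g'] by auto
      have "even (ht g' k - ht g k)" using par_even[OF par] .
      hence "even (ht g' k - v)" using a(3) by presburger
      hence "v \<noteq> ht g' k - 1" by presburger
      hence "v < ht g' k - 2" using a(2) ne True by auto
      thus ?thesis using hf True by simp
    next
      case False thus ?thesis using hf a by simp
    qed
    thus "x \<in> region g (flipdown g' m)" using kv k a by (auto simp: region_def)
  qed
qed

lemma maxel_region:
  assumes g: "g \<in> dyck n" and g': "g' \<in> dyck n" and le: "dyck_le g g'"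
  shows "maxel (region g g') rD = (\<lambda>m. (m, ht g' m - 2)) ` {m. peak g' m \<and> ht g m < ht g' m}"
proof -
  have l: "length g = length g'" by (rule dyck_same_length[OF g g'])
  have par: "\<And>k. k \<le> length g \<Longrightarrow> even (ht g k + int k) \<and> even (ht g' k + int k)"
    using l ht_parity by auto
  show ?thesis
  proof (intro set_eqI iffI)
    fix x assume x: "x \<in> maxel (region g g') rD"
    obtain m v where mv: "x = (m, v)" by (cases x)
    have inr: "(m, v) \<in> region g g'" and nomax: "\<forall>c'\<in>region g g'. \<not> rD (m, v) c'"
      using x mv by (auto simp: maxel_def)
    have mle: "m \<le> length g" and a: "ht g m \<le> v" "v < ht g' m" "even (v - ht g m)"
      using inr by (auto simp: region_def)
    have "v \<le> ht g' m - 2"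
    proof -
      have "even (ht g' m - ht g m)" using par_even par[OF mle] by blast
      hence "even (ht g' m - v)" using a(3) by presburger
      thus ?thesis using a(2) by presburger
    qed
    have m0: "m \<noteq> 0" using a by (cases "m = 0") auto
    have e0: "ht g (length g) = 0" "ht g' (length g) = 0" using dyck_end[OF g] dyck_end[OF g'] l by auto
    have mN: "m \<noteq> length g" using a e0 by auto
    have mlt: "m < length g" using mle mN by simp
    have nxt: "ht g' (Suc m) \<le> v + 1"
    proof (rule ccontr)
      assume c: "\<not> ht g' (Suc m) \<le> v + 1"
      have s: "ht g (Suc m) = ht g m + 1 \<or> ht g (Suc m) = ht g m - 1" using ht_step[OF mlt] .
      have "even (v + 1 - ht g (Suc m))" using par_step[OF a(3) s] .
      moreover have "ht g (Suc m) \<le> v + 1" using s a by auto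
      ultimately have "(Suc m, v + 1) \<in> region g g'"
        unfolding region_def using c mlt by simp
      moreover have "rD (m, v) (Suc m, v + 1)" by simp
      ultimately show False using nomax by blast
    qed
    have prv: "ht g' (m - 1) \<le> v + 1"
    proof (rule ccontr)
      assume c: "\<not> ht g' (m - 1) \<le> v + 1"
      have sm: "Suc (m - 1) = m" using m0 by simp
      have s: "ht g m = ht g (m - 1) + 1 \<or> ht g m = ht g (m - 1) - 1"
        using ht_step[of "m - 1" g] mlt sm by simp
      have s': "ht g (m - 1) = ht g m + 1 \<or> ht g (m - 1) = ht g m - 1" using s by auto
      have "even (v + 1 - ht g (m - 1))" using par_step[OF a(3) s'] .
      moreover have "ht g (m - 1) \<le> v + 1" using s a by auto
      ultimately have "(m - 1, v + 1) \<in> region g g'"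
        unfolding region_def using c mlt by simp
      moreover have "rD (m, v) (m - 1, v + 1)" using sm by simp
      ultimately show False using nomax by blast
    qed
    have s1: "ht g' (Suc m) = ht g' m + 1 \<or> ht g' (Suc m) = ht g' m - 1" using ht_step[of m g'] mlt l by simp
    have s2: "ht g' m = ht g' (m - 1) + 1 \<or> ht g' m = ht g' (m - 1) - 1"
      using ht_step[of "m - 1" g'] mlt l m0 by simp
    have e1: "ht g' (Suc m) = ht g' m - 1" "ht g' (m - 1) = ht g' m - 1" "v = ht g' m - 2"
      using s1 s2 nxt prv \<open>v \<le> ht g' m - 2\<close> by auto
    have "peak g' m" using peak_iff_ht[of m g'] m0 mlt l e1 by simp
    thus "x \<in> (\<lambda>m. (m, ht g' m - 2)) ` {m. peak g' m \<and> ht g m < ht g' m}" using mv e1 a by auto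
  next
    fix x assume "x \<in> (\<lambda>m. (m, ht g' m - 2)) ` {m. peak g' m \<and> ht g m < ht g' m}"
    then obtain m where x: "x = (m, ht g' m - 2)" and pk: "peak g' m" and lt: "ht g m < ht g' m" by auto
    have mlt: "m < length g" using pk l by (simp add: peak_def)
    have pm: "even (ht g m + int m)" "even (ht g' m + int m)" using par[of m] mlt by auto
    have "ht g m \<le> ht g' m - 2" using par_ge2[OF pm lt] .
    moreover have "even (ht g' m - 2 - ht g m)" using par_even[OF pm] by presburger
    ultimately have inr: "(m, ht g' m - 2) \<in> region g g'" using mlt by (auto simp: region_def)
    have "\<forall>c'\<in>region g g'. \<not> rD (m, ht g' m - 2) c'"
    proof
      fix c' assume c': "c' \<in> region g g'"
      obtain k v where kv: "c' = (k, v)" by (cases c')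
      show "\<not> rD (m, ht g' m - 2) c'"
      proof
        assume r: "rD (m, ht g' m - 2) c'"
        hence v: "v = ht g' m - 1" and k: "k = Suc m \<or> Suc k = m" using kv by auto
        have "v < ht g' k" using c' kv by (simp add: region_def)
        moreover have "ht g' k = ht g' m - 1" using k peak_ht[OF pk] by auto
        ultimately show False using v by simp
      qed
    qed
    thus "x \<in> maxel (region g g') rD" using inr x by (simp add: maxel_def)
  qed
qed


lemma dyck_le_refl: "dyck_le g g" by (simp add: dyck_le_def)

lemma covers_set:
  assumes g': "g' \<in> dyck n"
  shows "{d\<in>dyck n. dyck_covers n d g'} = flipdown g' ` {m. peak g' m \<and> 2 \<le> ht g' m}"
proof
  show "{d\<in>dyck n. dyck_covers n d g'} \<subseteq> flipdown g' ` {m. peak g' m \<and> 2 \<le> ht g' m}"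
    using covers_flipdown by blast
  show "flipdown g' ` {m. peak g' m \<and> 2 \<le> ht g' m} \<subseteq> {d\<in>dyck n. dyck_covers n d g'}"
    using flipdown_covers[OF g'] flipdown_dyck[OF g'] by blast
qed

lemma inj_flipdown: "inj_on (flipdown g') {m. peak g' m \<and> 2 \<le> ht g' m}"
proof (rule inj_onI)
  fix m m' assume m: "m \<in> {m. peak g' m \<and> 2 \<le> ht g' m}" and m': "m' \<in> {m. peak g' m \<and> 2 \<le> ht g' m}"
    and eq: "flipdown g' m = flipdown g' m'"
  have pm: "peak g' m" and pm': "peak g' m'" using m m' by auto
  have ml: "m \<le> length g'" using pm by (simp add: peak_def)
  show "m = m'"
  proof (rule ccontr)
    assume ne: "m \<noteq> m'"
    have "ht (flipdown g' m) m = ht g' m - 2" using ht_flipdown[OF pm ml] by simp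
    moreover have "ht (flipdown g' m') m = ht g' m" using ht_flipdown[OF pm' ml] ne by simp
    ultimately show False using eq by simp
  qed
qed

lemma chains_E:
  assumes g: "g \<in> dyck n" and g': "g' \<in> dyck n"
  shows "card (chainsFT n h g g') = (if dyck_le g g' \<and> card (region g g') = h then E g g' else 0)"
  using g'
proof (induction h arbitrary: g')
  case 0
  show ?case
  proof (cases "g = g'")
    case True thus ?thesis using g by (simp add: chainsFT_0 dyck_le_refl region_self E_def)
  next
    case False
    have "\<not> (dyck_le g g' \<and> card (region g g') = 0)"
    proof
      assume a: "dyck_le g g' \<and> card (region g g') = 0"
      hence "region g g' = {}" using finite_region by auto
      hence "g = g'" using region_empty_eq[OF dyck_same_length[OF g "0.prems"]] a by simp
      thus False using False by simp
    qed
    thus ?thesis using False by (auto simp: chainsFT_0)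
  qed
next
  case (Suc h)
  have g': "g' \<in> dyck n" by fact
  let ?Pk = "{m. peak g' m \<and> 2 \<le> ht g' m}"
  let ?R = "region g g'"
  let ?T = "\<lambda>m. if dyck_le g g' \<and> ht g m < ht g' m \<and> card ?R = Suc h
              then card (linext (?R - {(m, ht g' m - 2)}) rD) else 0"
  have "card (chainsFT n (Suc h) g g') = (\<Sum>d\<in>{d\<in>dyck n. dyck_covers n d g'}. card (chainsFT n h g d))"
    by (rule chainsFT_Suc[OF g'])
  also have "\<dots> = (\<Sum>d\<in>{d\<in>dyck n. dyck_covers n d g'}. (if dyck_le g d \<and> card (region g d) = h then E g d else 0))"
    by (rule sum.cong[OF refl]) (use Suc.IH in auto)
  also have "\<dots> = (\<Sum>m\<in>?Pk. (if dyck_le g (flipdown g' m) \<and> card (region g (flipdown g' m)) = h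
                        then E g (flipdown g' m) else 0))"
    unfolding covers_set[OF g'] by (rule sum.reindex[OF inj_flipdown, unfolded comp_def])
  also have "\<dots> = (\<Sum>m\<in>?Pk. ?T m)"
  proof (rule sum.cong[OF refl])
    fix m assume m: "m \<in> ?Pk"
    hence pk: "peak g' m" by simp
    have fd: "flipdown g' m \<in> dyck n" using flipdown_dyck[OF g' pk] m by simp
    show "(if dyck_le g (flipdown g' m) \<and> card (region g (flipdown g' m)) = h then E g (flipdown g' m) else 0) = ?T m"
    proof (cases "dyck_le g g' \<and> ht g m < ht g' m")
      case True
      have le': "dyck_le g g'" using True by simp
      have "(m, ht g' m - 2) \<in> maxel ?R rD"
        unfolding maxel_region[OF g g' le'] using True pk by blast
      hence cin: "(m, ht g' m - 2) \<in> ?R" by (simp add: maxel_def)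
      have rf: "region g (flipdown g' m) = ?R - {(m, ht g' m - 2)}" by (rule region_flipdown[OF g g' pk])
      have cr: "card (?R - {(m, ht g' m - 2)}) = card ?R - 1" using card_Diff_singleton[OF cin] .
      have cpos: "card ?R > 0" using cin finite_region[of g g'] by (auto simp: card_gt_0_iff)
      have "card (region g (flipdown g' m)) = card ?R - 1" unfolding rf by (rule cr)
      hence ciff: "card (region g (flipdown g' m)) = h \<longleftrightarrow> card ?R = Suc h" using cpos by arith
      have A: "dyck_le g (flipdown g' m)" using le_flipdown_iff[OF g g' pk] True by simp
      show ?thesis unfolding E_def using A True ciff rf by simp
    next
      case False
      have "\<not> dyck_le g (flipdown g' m)" using le_flipdown_iff[OF g g' pk] False by simp
      thus ?thesis using False by auto
    qed
  qed
  also have "\<dots> = (if dyck_le g g' \<and> card ?R = Suc h then E g g' else 0)"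
  proof (cases "dyck_le g g' \<and> card ?R = Suc h")
    case False
    have "\<forall>m. ?T m = 0" using False by auto
    hence z: "(\<Sum>m\<in>?Pk. ?T m) = 0" by simp
    show ?thesis by (simp only: z if_not_P[OF False])
  next
    case True
    have le: "dyck_le g g'" using True by simp
    let ?M = "{m. peak g' m \<and> ht g m < ht g' m}"
    have fPk: "finite ?Pk" by (rule finite_subset[of _ "{..<length g'}"]) (auto simp: peak_def)
    have sub: "?M \<subseteq> ?Pk"
    proof
      fix m assume m: "m \<in> ?M"
      have ml: "m \<le> length g'" using m by (simp add: peak_def)
      have "even (ht g m + int m)" "even (ht g' m + int m)"
        using ht_parity[of m g] ht_parity[of m g'] ml dyck_same_length[OF g g'] by auto
      hence "ht g m \<le> ht g' m - 2" using par_ge2 m by blast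
      thus "m \<in> ?Pk" using m dyck_nonneg[OF g, of m] by simp
    qed
    have "(\<Sum>m\<in>?Pk. ?T m) = (\<Sum>m\<in>?M. card (linext (?R - {(m, ht g' m - 2)}) rD))"
    proof -
      have "(\<Sum>m\<in>?Pk. ?T m) = (\<Sum>m\<in>?M. ?T m)"
        by (rule sum.mono_neutral_right[OF fPk sub]) (use True in auto)
      also have "\<dots> = (\<Sum>m\<in>?M. card (linext (?R - {(m, ht g' m - 2)}) rD))"
        by (rule sum.cong[OF refl]) (use True in auto)
      finally show ?thesis .
    qed
    also have "\<dots> = (\<Sum>c\<in>maxel ?R rD. card (linext (?R - {c}) rD))"
    proof -
      have inj: "inj_on (\<lambda>m. (m, ht g' m - 2)) ?M" by (rule inj_onI) simp
      show ?thesis unfolding maxel_region[OF g g' le] sum.reindex[OF inj] by (simp add: comp_def)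
    qed
    also have "\<dots> = E g g'"
    proof -
      have "?R \<noteq> {}" using True by auto
      thus ?thesis unfolding E_def using linext_rec[OF finite_region] by simp
    qed
    finally show ?thesis using True by simp
  qed
  finally show ?case .
qed

theorem lhs_formula:
  "sc h n = (\<Sum>g\<in>dyck n. \<Sum>g'\<in>dyck n. if dyck_le g g' \<and> card (region g g') = h then E g g' else 0)"
  unfolding sc_split by (rule sum.cong[OF refl], rule sum.cong[OF refl]) (simp add: chains_E)


lemma col_ht_Nil[simp]: "col_ht [] x = 0" by (simp add: col_ht_def)

lemma col_ht_Cons:
  "col_ht (s # w) x = (if s = U then 1 else 0) +
     card {j. j < length w \<and> w ! j = U \<and> (if s = D then 1 else 0) + cnt D (take j w) \<le> x}"
proof -
  let ?A = "{j. j < length w \<and> w ! j = U \<and> (if s = D then 1 else 0) + cnt D (take j w) \<le> x}"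
  have eq: "{i. i < length (s # w) \<and> (s # w) ! i = U \<and> cnt D (take i (s # w)) \<le> x} =
        (if s = U then {0} else {}) \<union> Suc ` ?A"
  proof (intro set_eqI iffI)
    fix i assume i: "i \<in> {i. i < length (s # w) \<and> (s # w) ! i = U \<and> cnt D (take i (s # w)) \<le> x}"
    show "i \<in> (if s = U then {0} else {}) \<union> Suc ` ?A"
    proof (cases i)
      case 0 thus ?thesis using i by auto
    next
      case (Suc j)
      have "j \<in> ?A" using i Suc by (cases s) auto
      thus ?thesis using Suc by blast
    qed
  next
    fix i assume i: "i \<in> (if s = U then {0} else {}) \<union> Suc ` ?A"
    show "i \<in> {i. i < length (s # w) \<and> (s # w) ! i = U \<and> cnt D (take i (s # w)) \<le> x}"
    proof (cases "i \<in> Suc ` ?A")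
      case True
      then obtain j where "i = Suc j" "j \<in> ?A" by blast
      thus ?thesis by (cases s) auto
    next
      case False thus ?thesis using i by (auto split: if_splits)
    qed
  qed
  have fin: "finite ?A" by simp
  have "card ((if s = U then {0} else {}) \<union> Suc ` ?A) = card (if s = U then {0::nat} else {}) + card (Suc ` ?A)"
    by (rule card_Un_disjoint) auto
  also have "card (Suc ` ?A) = card ?A" by (rule card_image) simp
  finally show ?thesis unfolding col_ht_def eq by simp
qed

lemma col_ht_D: "col_ht (D # w) x = (if x = 0 then 0 else col_ht w (x - 1))"
proof (cases x)
  case 0 thus ?thesis unfolding col_ht_Cons[of D w x] by simp
next
  case (Suc x')
  have "{j. j < length w \<and> w ! j = U \<and> 1 + cnt D (take j w) \<le> x} =
        {j. j < length w \<and> w ! j = U \<and> cnt D (take j w) \<le> x'}" using Suc by auto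
  thus ?thesis unfolding col_ht_Cons[of D w x] using Suc by (simp add: col_ht_def)
qed

lemma col_ht_U: "col_ht (U # w) x = Suc (col_ht w x)"
  unfolding col_ht_Cons[of U w x] by (simp add: col_ht_def)

lemma col_ht_mono: "x \<le> x' \<Longrightarrow> col_ht w x \<le> col_ht w x'"
  unfolding col_ht_def by (rule card_mono) auto

lemma take_Cons_Suc: "take (Suc k) (s # w) = s # take k w" by simp

lemma col_ht_A:
  "x < cnt D w \<Longrightarrow> (col_ht w x \<le> y \<longleftrightarrow> Suc x \<le> cnt D (take (x + y + 1) w))"
proof (induction w arbitrary: x y)
  case Nil thus ?case by simp
next
  case (Cons s w)
  show ?case
  proof (cases s)
    case D
    show ?thesis
    proof (cases x)
      case 0 thus ?thesis using D by (simp add: col_ht_D)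
    next
      case (Suc x')
      have "x' < cnt D w" using Cons.prems D Suc by simp
      hence "col_ht w x' \<le> y \<longleftrightarrow> Suc x' \<le> cnt D (take (x' + y + 1) w)" by (rule Cons.IH)
      moreover have "take (x + y + 1) (s # w) = D # take (x' + y + 1) w" using Suc D by simp
      ultimately show ?thesis using D Suc by (simp add: col_ht_D)
    qed
  next
    case U
    have xw: "x < cnt D w" using Cons.prems U by simp
    show ?thesis
    proof (cases y)
      case 0
      have "cnt D (take x w) \<le> x" using cnt_le[of D "take x w"] by simp
      thus ?thesis using U 0 by (simp add: col_ht_U)
    next
      case (Suc y')
      have "col_ht w x \<le> y' \<longleftrightarrow> Suc x \<le> cnt D (take (x + y' + 1) w)" by (rule Cons.IH[OF xw])
      moreover have "take (x + y + 1) (s # w) = U # take (x + y' + 1) w" using Suc U by simp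
      ultimately show ?thesis using U Suc by (simp add: col_ht_U)
    qed
  qed
qed

lemma col_ht_B:
  "x < cnt D w \<Longrightarrow> (y < col_ht w x \<longleftrightarrow> cnt D (take (x + y + 1) w) \<le> x \<and> x + y + 1 \<le> length w)"
proof (induction w arbitrary: x y)
  case Nil thus ?case by simp
next
  case (Cons s w)
  show ?case
  proof (cases s)
    case D
    show ?thesis
    proof (cases x)
      case 0 thus ?thesis using D by (simp add: col_ht_D)
    next
      case (Suc x')
      have "x' < cnt D w" using Cons.prems D Suc by simp
      hence "y < col_ht w x' \<longleftrightarrow> cnt D (take (x' + y + 1) w) \<le> x' \<and> x' + y + 1 \<le> length w" by (rule Cons.IH)
      moreover have "take (x + y + 1) (s # w) = D # take (x' + y + 1) w" using Suc D by simp
      ultimately show ?thesis using D Suc by (simp add: col_ht_D)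
    qed
  next
    case U
    have xw: "x < cnt D w" using Cons.prems U by simp
    show ?thesis
    proof (cases y)
      case 0
      have "cnt D (take x w) \<le> x" using cnt_le[of D "take x w"] by simp
      moreover have "x \<le> length w" using xw cnt_le[of D w] by simp
      ultimately show ?thesis using U 0 by (simp add: col_ht_U)
    next
      case (Suc y')
      have "y' < col_ht w x \<longleftrightarrow> cnt D (take (x + y' + 1) w) \<le> x \<and> x + y' + 1 \<le> length w" by (rule Cons.IH[OF xw])
      moreover have "take (x + y + 1) (s # w) = U # take (x + y' + 1) w" using Suc U by simp
      ultimately show ?thesis using U Suc by (simp add: col_ht_U)
    qed
  qed
qed


lemma cnt_take_le: "cnt s (take k w) \<le> cnt s w"
proof -
  have "cnt s w = cnt s (take k w) + cnt s (drop k w)"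
    using cnt_append[of s "take k w" "drop k w"] by simp
  thus ?thesis by simp
qed

lemma ht_bounds: "k \<le> length w \<Longrightarrow> - int k \<le> ht w k \<and> ht w k \<le> int k"
  using ht_alt[of k w] cnt_le[of D "take k w"] by simp

lemma skfs_D:
  assumes "(P, Q) \<in> SkFS"
  shows "length P = length Q" "cnt D P = cnt D Q" "P \<noteq> []" "hd P = D" "hd Q = U"
    "\<And>k. 0 < k \<Longrightarrow> k < length P \<Longrightarrow> cnt D (take k P) > cnt D (take k Q)"
  using assms by (auto simp: SkFS_def)

lemma skfs_ht_end:
  assumes "(P, Q) \<in> SkFS" shows "ht P (length P) = ht Q (length P)"
  using ht_alt[of "length P" P] ht_alt[of "length P" Q] skfs_D[OF assms] by simp

lemma skfs_ht_lt:
  assumes "(P, Q) \<in> SkFS" "0 < k" "k < length P"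
  shows "ht P k < ht Q k"
  using ht_alt[of k P] ht_alt[of k Q] skfs_D(1)[OF assms(1)] skfs_D(6)[OF assms(1) assms(2) assms(3)] assms by simp

definition ShR :: "step list \<Rightarrow> step list \<Rightarrow> (nat \<times> int) set" where
  "ShR P Q = {(k, v). 0 < k \<and> k < length P \<and> ht P k \<le> v \<and> v < ht Q k \<and> even (v - ht P k)}"

fun sig :: "nat \<times> nat \<Rightarrow> nat \<times> int" where
  "sig (x, y) = (x + y + 1, int y - int x - 1)"

lemma par_sub2: "even (a + k) \<Longrightarrow> even (b + k) \<Longrightarrow> even (a - b :: int)" by presburger

lemma cells_sig:
  assumes S: "(P, Q) \<in> SkFS"
  shows "(x, y) \<in> cells (P, Q) \<longleftrightarrow> sig (x, y) \<in> ShR P Q"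
proof
  assume c: "(x, y) \<in> cells (P, Q)"
  have x: "x < cnt D P" and cy1: "col_ht P x \<le> y" and cy2: "y < col_ht Q x"
    using c by (auto simp: cells_def)
  have xQ: "x < cnt D Q" using x skfs_D(2)[OF S] by simp
  let ?k = "x + y + 1"
  have a1: "Suc x \<le> cnt D (take ?k P)" using col_ht_A[OF x] cy1 by simp
  have b1: "cnt D (take ?k Q) \<le> x" "?k \<le> length Q" using col_ht_B[OF xQ] cy2 by auto
  have kP: "?k \<le> length P" using b1 skfs_D(1)[OF S] by simp
  have hP: "ht P ?k = int ?k - 2 * int (cnt D (take ?k P))" by (rule ht_alt[OF kP])
  have hQ: "ht Q ?k = int ?k - 2 * int (cnt D (take ?k Q))" by (rule ht_alt[OF b1(2)])
  have i1: "int (Suc x) \<le> int (cnt D (take ?k P))" using a1 by simp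
  have i2: "int (cnt D (take ?k Q)) \<le> int x" using b1 by simp
  have l1: "ht P ?k \<le> int y - int x - 1" using hP i1 by simp
  have l2: "int y - int x - 1 < ht Q ?k" using hQ i2 by simp
  have kl: "?k < length P"
  proof (rule ccontr)
    assume "\<not> ?k < length P"
    hence "?k = length P" using kP by simp
    hence "ht P ?k = ht Q ?k" using skfs_ht_end[OF S] by simp
    thus False using l1 l2 by simp
  qed
  have ev: "even (int y - int x - 1 - ht P ?k)"
  proof -
    have e: "int y - int x - 1 - ht P ?k = 2 * (int (cnt D (take ?k P)) - int x - 1)" using hP by simp
    show ?thesis unfolding e by (rule dvd_triv_left)
  qed
  show "sig (x, y) \<in> ShR P Q" using kl l1 l2 ev by (simp add: ShR_def)
next
  assume s: "sig (x, y) \<in> ShR P Q"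
  let ?k = "x + y + 1" and ?v = "int y - int x - 1"
  have kl: "?k < length P" and l1: "ht P ?k \<le> ?v" and l2: "?v < ht Q ?k" and ev: "even (?v - ht P ?k)"
    using s by (auto simp: ShR_def)
  have kP: "?k \<le> length P" using kl by simp
  have kQ: "?k \<le> length Q" using kl skfs_D(1)[OF S] by simp
  have hP: "ht P ?k = int ?k - 2 * int (cnt D (take ?k P))" by (rule ht_alt[OF kP])
  have hQ: "ht Q ?k = int ?k - 2 * int (cnt D (take ?k Q))" by (rule ht_alt[OF kQ])
  have a1: "Suc x \<le> cnt D (take ?k P)"
  proof -
    have "int (Suc x) \<le> int (cnt D (take ?k P))" using l1 hP by simp
    thus ?thesis by simp
  qed
  have evQ: "even (ht Q ?k - ?v)"
  proof -
    have e: "ht Q ?k - ?v = 2 * (int x - int (cnt D (take ?k Q)) + 1)" using hQ by simp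
    show ?thesis unfolding e by (rule dvd_triv_left)
  qed
  have "?v + 2 \<le> ht Q ?k" using l2 evQ by presburger
  hence b1: "cnt D (take ?k Q) \<le> x"
  proof -
    assume "?v + 2 \<le> ht Q ?k"
    hence "int (cnt D (take ?k Q)) \<le> int x" using hQ by simp
    thus ?thesis by simp
  qed
  have x: "x < cnt D P" using a1 cnt_take_le[of D ?k P] by simp
  have xQ: "x < cnt D Q" using x skfs_D(2)[OF S] by simp
  have "col_ht P x \<le> y" using col_ht_A[OF x] a1 by simp
  moreover have "y < col_ht Q x" using col_ht_B[OF xQ] b1 kQ by simp
  ultimately show "(x, y) \<in> cells (P, Q)" using x by (simp add: cells_def)
qed

lemma sig_inj: "inj sig"
proof (rule injI)
  fix a b assume "sig a = sig b"
  thus "a = b" by (cases a, cases b) auto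
qed

lemma sig_bij:
  assumes S: "(P, Q) \<in> SkFS"
  shows "bij_betw sig (cells (P, Q)) (ShR P Q)"
proof (rule bij_betw_imageI)
  show "inj_on sig (cells (P, Q))" using sig_inj by (rule inj_on_subset) simp
  show "sig ` cells (P, Q) = ShR P Q"
  proof
    show "sig ` cells (P, Q) \<subseteq> ShR P Q" using cells_sig[OF S] by auto
    show "ShR P Q \<subseteq> sig ` cells (P, Q)"
    proof
      fix z assume z: "z \<in> ShR P Q"
      obtain k v where kv: "z = (k, v)" by (cases z)
      have k0: "0 < k" and kl: "k < length P" and l1: "ht P k \<le> v" and l2: "v < ht Q k"
        and ev: "even (v - ht P k)" using z kv by (auto simp: ShR_def)
      have kQ: "k \<le> length Q" using kl skfs_D(1)[OF S] by simp
      have bP: "- int k \<le> ht P k" using ht_bounds[of k P] kl by simp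
      have bQ: "ht Q k \<le> int k" using ht_bounds[of k Q] kQ by simp
      have pP: "even (ht P k + int k)" using ht_parity[of k P] kl by simp
      have pQ: "even (ht Q k + int k)" using ht_parity[of k Q] kQ by simp
      have evk: "even (int k + v)" using ev pP by presburger
      have "even (ht Q k - v)" using ev pP pQ by presburger
      hence v2: "v + 2 \<le> ht Q k" using l2 by presburger
      from evk obtain j where j: "int k + v = 2 * j" by (rule evenE)
      have j0: "0 \<le> j" using j l1 bP by simp
      have j1: "j + 1 \<le> int k" using j v2 bQ by simp
      define x where "x = nat (int k - j - 1)"
      define y where "y = nat j"
      have ix: "int x = int k - j - 1" using j1 by (simp add: x_def)
      have iy: "int y = j" using j0 by (simp add: y_def)
      have "int (x + y + 1) = int k" using ix iy by simp
      hence e1: "x + y + 1 = k" by (simp only: of_nat_eq_iff)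
      have e2: "int y - int x - 1 = v" using ix iy j by simp
      have "sig (x, y) = z" using e1 e2 kv by simp
      moreover have "(x, y) \<in> cells (P, Q)" using cells_sig[OF S, of x y] \<open>sig (x, y) = z\<close> z by simp
      ultimately show "z \<in> sig ` cells (P, Q)" by blast
    qed
  qed
qed

fun rT :: "nat \<times> nat \<Rightarrow> nat \<times> nat \<Rightarrow> bool" where
  "rT (x, y) (x', y') \<longleftrightarrow> (y = y' \<and> x' < x) \<or> (x = x' \<and> y < y')"

fun rTa :: "nat \<times> nat \<Rightarrow> nat \<times> nat \<Rightarrow> bool" where
  "rTa (x, y) (x', y') \<longleftrightarrow> (y' = y \<and> Suc x' = x) \<or> (x' = x \<and> y' = Suc y)"

lemma rTa_rD: "rTa (x, y) (x', y') \<longleftrightarrow> rD (sig (x, y)) (sig (x', y'))"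
  by auto

lemma tableaux_linext: "tableaux \<phi> = linext (cells \<phi>) rT"
proof -
  have "(\<forall>c\<in>cells \<phi>. \<forall>c'\<in>cells \<phi>. rT c c' \<longrightarrow> T c < T c') \<longleftrightarrow>
        (\<forall>x x' y. (x, y) \<in> cells \<phi> \<and> (x', y) \<in> cells \<phi> \<and> x < x' \<longrightarrow> T (x, y) > T (x', y)) \<and>
        (\<forall>x y y'. (x, y) \<in> cells \<phi> \<and> (x, y') \<in> cells \<phi> \<and> y < y' \<longrightarrow> T (x, y') > T (x, y))" for T
  proof
    assume a: "\<forall>c\<in>cells \<phi>. \<forall>c'\<in>cells \<phi>. rT c c' \<longrightarrow> T c < T c'"
    show "(\<forall>x x' y. (x, y) \<in> cells \<phi> \<and> (x', y) \<in> cells \<phi> \<and> x < x' \<longrightarrow> T (x, y) > T (x', y)) \<and>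
        (\<forall>x y y'. (x, y) \<in> cells \<phi> \<and> (x, y') \<in> cells \<phi> \<and> y < y' \<longrightarrow> T (x, y') > T (x, y))"
    proof (intro conjI allI impI)
      fix x x' y assume h: "(x, y) \<in> cells \<phi> \<and> (x', y) \<in> cells \<phi> \<and> x < x'"
      thus "T (x, y) > T (x', y)" using a[rule_format, of "(x', y)" "(x, y)"] by simp
    next
      fix x y y' assume h: "(x, y) \<in> cells \<phi> \<and> (x, y') \<in> cells \<phi> \<and> y < y'"
      thus "T (x, y') > T (x, y)" using a[rule_format, of "(x, y)" "(x, y')"] by simp
    qed
  next
    assume a: "(\<forall>x x' y. (x, y) \<in> cells \<phi> \<and> (x', y) \<in> cells \<phi> \<and> x < x' \<longrightarrow> T (x, y) > T (x', y)) \<and>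
        (\<forall>x y y'. (x, y) \<in> cells \<phi> \<and> (x, y') \<in> cells \<phi> \<and> y < y' \<longrightarrow> T (x, y') > T (x, y))"
    show "\<forall>c\<in>cells \<phi>. \<forall>c'\<in>cells \<phi>. rT c c' \<longrightarrow> T c < T c'"
    proof (intro ballI impI)
      fix c c' assume c: "c \<in> cells \<phi>" and c': "c' \<in> cells \<phi>" and r: "rT c c'"
      obtain x y where cx: "c = (x, y)" by (cases c)
      obtain x' y' where cx': "c' = (x', y')" by (cases c')
      show "T c < T c'" using a c c' r cx cx' by auto
    qed
  qed
  thus ?thesis unfolding tableaux_def linext_def area_def by blast
qed

lemma cells_row:
  assumes S: "(P, Q) \<in> SkFS" and a: "(x, y) \<in> cells (P, Q)" "(x', y) \<in> cells (P, Q)" "x \<le> x''" "x'' \<le> x'"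
  shows "(x'', y) \<in> cells (P, Q)"
proof -
  have "col_ht P x'' \<le> col_ht P x'" by (rule col_ht_mono[OF a(4)])
  moreover have "col_ht Q x \<le> col_ht Q x''" by (rule col_ht_mono[OF a(3)])
  ultimately show ?thesis using a by (auto simp: cells_def)
qed

lemma cells_col:
  assumes a: "(x, y) \<in> cells \<phi>" "(x, y') \<in> cells \<phi>" "y \<le> y''" "y'' \<le> y'"
  shows "(x, y'') \<in> cells \<phi>"
  using a by (auto simp: cells_def)

lemma linext_rT_rTa:
  assumes S: "(P, Q) \<in> SkFS"
  shows "linext (cells (P, Q)) rT = linext (cells (P, Q)) rTa"
proof
  let ?C = "cells (P, Q)"
  show "linext ?C rT \<subseteq> linext ?C rTa"
  proof (rule linext_trancl_sub)
    fix c c' assume "c \<in> ?C" "c' \<in> ?C" "rTa c c'"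
    moreover have "rT c c'" using \<open>rTa c c'\<close> by (cases c, cases c') auto
    ultimately show "(\<lambda>x y. x \<in> ?C \<and> y \<in> ?C \<and> rT x y)\<^sup>+\<^sup>+ c c'" by auto
  qed
  let ?R = "(\<lambda>x y. x \<in> ?C \<and> y \<in> ?C \<and> rTa x y)\<^sup>+\<^sup>+"
  have row: "\<And>d. (x + d + 1, y) \<in> ?C \<Longrightarrow> (x, y) \<in> ?C \<Longrightarrow> ?R (x + d + 1, y) (x, y)" for x y
  proof -
    fix d show "(x + d + 1, y) \<in> ?C \<Longrightarrow> (x, y) \<in> ?C \<Longrightarrow> ?R (x + d + 1, y) (x, y)"
    proof (induction d)
      case 0 thus ?case by auto
    next
      case (Suc d)
      have m: "(x + d + 1, y) \<in> ?C" using cells_row[OF S Suc.prems(2) Suc.prems(1)] by simp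
      have "?R (x + Suc d + 1, y) (x + d + 1, y)" using m Suc.prems by auto
      moreover have "?R (x + d + 1, y) (x, y)" using Suc.IH m Suc.prems by simp
      ultimately show ?case by (rule tranclp_trans)
    qed
  qed
  have col: "\<And>d. (x, y) \<in> ?C \<Longrightarrow> (x, y + d + 1) \<in> ?C \<Longrightarrow> ?R (x, y) (x, y + d + 1)" for x y
  proof -
    fix d show "(x, y) \<in> ?C \<Longrightarrow> (x, y + d + 1) \<in> ?C \<Longrightarrow> ?R (x, y) (x, y + d + 1)"
    proof (induction d)
      case 0 thus ?case by auto
    next
      case (Suc d)
      have m: "(x, y + d + 1) \<in> ?C" using cells_col[OF Suc.prems(1) Suc.prems(2)] by simp
      have "?R (x, y) (x, y + d + 1)" using Suc.IH m Suc.prems by simp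
      moreover have "?R (x, y + d + 1) (x, y + Suc d + 1)" using m Suc.prems by auto
      ultimately show ?case by (rule tranclp_trans)
    qed
  qed
  show "linext ?C rTa \<subseteq> linext ?C rT"
  proof (rule linext_trancl_sub)
    fix c c' assume c: "c \<in> ?C" and c': "c' \<in> ?C" and r: "rT c c'"
    obtain x y where cx: "c = (x, y)" by (cases c)
    obtain x' y' where cx': "c' = (x', y')" by (cases c')
    show "?R c c'"
    proof (cases "y = y' \<and> x' < x")
      case True
      then obtain d where "x = x' + d + 1" by (metis add.commute add_Suc_right less_imp_Suc_add plus_1_eq_Suc)
      thus ?thesis using row[of x' d y] c c' cx cx' True by simp
    next
      case False
      hence "x = x' \<and> y < y'" using r cx cx' by auto
      then obtain d where "y' = y + d + 1" "x = x'" by (metis add.commute add_Suc_right less_imp_Suc_add plus_1_eq_Suc)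
      thus ?thesis using col[of x y d] c c' cx cx' by simp
    qed
  qed
qed

lemma t_ShR:
  assumes S: "(P, Q) \<in> SkFS"
  shows "t (P, Q) = card (linext (ShR P Q) rD)"
proof -
  have "t (P, Q) = card (linext (cells (P, Q)) rTa)"
    unfolding t_def tableaux_linext linext_rT_rTa[OF S] ..
  also have "\<dots> = card (linext (ShR P Q) rD)"
  proof (rule linext_iso[OF sig_bij[OF S]])
    show "\<forall>c\<in>cells (P, Q). \<forall>c'\<in>cells (P, Q). rTa c c' = rD (sig c) (sig c')"
      using rTa_rD by auto
  qed
  finally show ?thesis .
qed

lemma area_ShR:
  assumes S: "(P, Q) \<in> SkFS"
  shows "area (P, Q) = card (ShR P Q)"
  unfolding area_def by (rule bij_betw_same_card[OF sig_bij[OF S]])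


definition goodconf :: "step list \<Rightarrow> (nat \<times> nat \<times> nat) set \<Rightarrow> (nat \<times> nat \<times> nat \<Rightarrow> step list \<times> step list) \<Rightarrow> bool" where
  "goodconf g Occ \<phi> \<longleftrightarrow> finite Occ \<and>
     (\<forall>oc\<in>Occ. fst oc + fst (snd oc) \<le> length g) \<and>
     (\<forall>oc\<in>Occ. \<forall>oc'\<in>Occ. oc \<noteq> oc' \<longrightarrow> fst oc + fst (snd oc) \<le> fst oc' \<or> fst oc' + fst (snd oc') \<le> fst oc) \<and>
     (\<forall>oc\<in>Occ. \<phi> oc \<in> SkFS \<and> fst (\<phi> oc) = factor g (fst oc) (fst (snd oc)) \<and> area (\<phi> oc) = snd (snd oc))"

definition ho :: "nat \<times> nat \<times> nat \<Rightarrow> nat \<Rightarrow> bool" where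
  "ho oc k \<longleftrightarrow> fst oc \<le> k \<and> k < fst oc + fst (snd oc)"

definition ins :: "nat \<times> nat \<times> nat \<Rightarrow> nat \<Rightarrow> bool" where
  "ins oc k \<longleftrightarrow> fst oc < k \<and> k < fst oc + fst (snd oc)"

definition Phi :: "step list \<Rightarrow> (nat \<times> nat \<times> nat) set \<Rightarrow> (nat \<times> nat \<times> nat \<Rightarrow> step list \<times> step list) \<Rightarrow> step list" where
  "Phi g Occ \<phi> = map (\<lambda>i. if \<exists>oc\<in>Occ. ho oc i
       then snd (\<phi> (SOME oc. oc \<in> Occ \<and> ho oc i)) ! (i - fst (SOME oc. oc \<in> Occ \<and> ho oc i))
       else g ! i) [0..<length g]"

definition Rg :: "step list \<Rightarrow> step list \<Rightarrow> nat \<times> nat \<times> nat \<Rightarrow> (nat \<times> int) set" where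
  "Rg g g' oc = {c \<in> region g g'. ins oc (fst c)}"

context
  fixes g Occ \<phi>
  assumes gc: "goodconf g Occ \<phi>"
begin

lemma gc_fin: "finite Occ" using gc by (simp add: goodconf_def)
lemma gc_bound: "oc \<in> Occ \<Longrightarrow> fst oc + fst (snd oc) \<le> length g" using gc by (simp add: goodconf_def)
lemma gc_disj: "oc \<in> Occ \<Longrightarrow> oc' \<in> Occ \<Longrightarrow> oc \<noteq> oc' \<Longrightarrow> fst oc + fst (snd oc) \<le> fst oc' \<or> fst oc' + fst (snd oc') \<le> fst oc"
  using gc by (simp add: goodconf_def)
lemma gc_sk: "oc \<in> Occ \<Longrightarrow> \<phi> oc \<in> SkFS" using gc by (simp add: goodconf_def)
lemma gc_lb: "oc \<in> Occ \<Longrightarrow> fst (\<phi> oc) = factor g (fst oc) (fst (snd oc))" using gc by (simp add: goodconf_def)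
lemma gc_area: "oc \<in> Occ \<Longrightarrow> area (\<phi> oc) = snd (snd oc)" using gc by (simp add: goodconf_def)

lemma gc_lenP: "oc \<in> Occ \<Longrightarrow> length (fst (\<phi> oc)) = fst (snd oc)"
  using gc_lb gc_bound length_factor by simp

lemma gc_lenQ: "oc \<in> Occ \<Longrightarrow> length (snd (\<phi> oc)) = fst (snd oc)"
proof -
  assume oc: "oc \<in> Occ"
  have "(fst (\<phi> oc), snd (\<phi> oc)) \<in> SkFS" using gc_sk[OF oc] by simp
  thus ?thesis using skfs_D(1) gc_lenP[OF oc] by metis
qed

lemma gc_lpos: "oc \<in> Occ \<Longrightarrow> 0 < fst (snd oc)"
proof -
  assume oc: "oc \<in> Occ"
  have "(fst (\<phi> oc), snd (\<phi> oc)) \<in> SkFS" using gc_sk[OF oc] by simp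
  hence "fst (\<phi> oc) \<noteq> []" using skfs_D(3) by metis
  thus ?thesis using gc_lenP[OF oc] by (metis length_greater_0_conv)
qed

lemma ho_unique: "oc \<in> Occ \<Longrightarrow> oc' \<in> Occ \<Longrightarrow> ho oc k \<Longrightarrow> ho oc' k \<Longrightarrow> oc = oc'"
  using gc_disj unfolding ho_def by fastforce

lemma ins_ho: "ins oc k \<Longrightarrow> ho oc k" by (simp add: ins_def ho_def)

lemma length_Phi[simp]: "length (Phi g Occ \<phi>) = length g" by (simp add: Phi_def)

lemma Phi_nth_in:
  assumes oc: "oc \<in> Occ" and h: "ho oc i"
  shows "Phi g Occ \<phi> ! i = snd (\<phi> oc) ! (i - fst oc)"
proof -
  have i: "i < length g" using h gc_bound[OF oc] by (simp add: ho_def)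
  have ex: "\<exists>oc\<in>Occ. ho oc i" using oc h by blast
  have "(SOME oc. oc \<in> Occ \<and> ho oc i) \<in> Occ \<and> ho (SOME oc. oc \<in> Occ \<and> ho oc i) i"
    using oc h by (rule someI[of "\<lambda>oc. oc \<in> Occ \<and> ho oc i", OF conjI])
  hence s: "(SOME oc. oc \<in> Occ \<and> ho oc i) = oc" using ho_unique oc h by blast
  show ?thesis using i ex s by (simp add: Phi_def)
qed

lemma Phi_nth_out:
  assumes "\<not> (\<exists>oc\<in>Occ. ho oc i)" "i < length g"
  shows "Phi g Occ \<phi> ! i = g ! i"
  using assms by (simp add: Phi_def)

lemma gc_PQ:
  assumes oc: "oc \<in> Occ"
  shows "(fst (\<phi> oc), snd (\<phi> oc)) \<in> SkFS"
  using gc_sk[OF oc] by simp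

lemma ht_Phi_main:
  assumes "k \<le> length g"
  shows "(\<forall>oc\<in>Occ. fst oc \<le> k \<and> k \<le> fst oc + fst (snd oc) \<longrightarrow>
            ht (Phi g Occ \<phi>) k - ht g k = ht (snd (\<phi> oc)) (k - fst oc) - ht (fst (\<phi> oc)) (k - fst oc)) \<and>
         ((\<forall>oc\<in>Occ. \<not> ins oc k) \<longrightarrow> ht (Phi g Occ \<phi>) k = ht g k)"
  using assms
proof (induction k)
  case 0
  show ?case by simp
next
  case (Suc k)
  let ?G = "Phi g Occ \<phi>"
  have k: "k < length g" using Suc.prems by simp
  have IH1: "\<And>oc. oc \<in> Occ \<Longrightarrow> fst oc \<le> k \<Longrightarrow> k \<le> fst oc + fst (snd oc) \<Longrightarrow>
            ht ?G k - ht g k = ht (snd (\<phi> oc)) (k - fst oc) - ht (fst (\<phi> oc)) (k - fst oc)"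
    using Suc.IH k by simp
  have IH2: "(\<forall>oc\<in>Occ. \<not> ins oc k) \<Longrightarrow> ht ?G k = ht g k" using Suc.IH k by simp
  have hG: "ht ?G (Suc k) = ht ?G k + stepv (?G ! k)" using ht_Suc[of k ?G] k by simp
  have hg: "ht g (Suc k) = ht g k + stepv (g ! k)" using ht_Suc[of k g] k by simp
  show ?case
  proof (cases "\<exists>oc\<in>Occ. ho oc k")
    case True
    then obtain oc where oc: "oc \<in> Occ" and hk: "ho oc k" by blast
    obtain p l a where pla: "oc = (p, l, a)" by (cases oc) auto
    let ?P = "fst (\<phi> oc)" and ?Q = "snd (\<phi> oc)"
    have S: "(?P, ?Q) \<in> SkFS" by (rule gc_PQ[OF oc])
    have pk: "p \<le> k" "k < p + l" using hk pla by (auto simp: ho_def)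
    have lP: "length ?P = l" using gc_lenP[OF oc] pla by simp
    have lQ: "length ?Q = l" using gc_lenQ[OF oc] pla by simp
    have bnd: "p + l \<le> length g" using gc_bound[OF oc] pla by simp
    have Gk: "?G ! k = ?Q ! (k - p)" using Phi_nth_in[OF oc hk] pla by simp
    have gk: "g ! k = ?P ! (k - p)"
    proof -
      have "?P = factor g p l" using gc_lb[OF oc] pla by simp
      hence "?P ! (k - p) = g ! (p + (k - p))" using nth_factor[OF bnd] pk by simp
      thus ?thesis using pk by simp
    qed
    have kp: "k - p < l" using pk by simp
    have sk: "Suc k - p = Suc (k - p)" using pk by simp
    have hQ: "ht ?Q (Suc (k - p)) = ht ?Q (k - p) + stepv (?Q ! (k - p))" using ht_Suc[of "k - p" ?Q] kp lQ by simp
    have hP: "ht ?P (Suc (k - p)) = ht ?P (k - p) + stepv (?P ! (k - p))" using ht_Suc[of "k - p" ?P] kp lP by simp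
    have Delta: "ht ?G (Suc k) - ht g (Suc k) = ht ?Q (Suc k - p) - ht ?P (Suc k - p)"
      using IH1[OF oc] pk pla hG hg Gk gk hQ hP sk by simp
    have endz: "Suc k = p + l \<Longrightarrow> ht ?Q (Suc k - p) - ht ?P (Suc k - p) = 0"
      using skfs_ht_end[OF S] lP lQ by simp
    show ?thesis
    proof (intro conjI ballI impI)
      fix oc' assume oc': "oc' \<in> Occ" and c: "fst oc' \<le> Suc k \<and> Suc k \<le> fst oc' + fst (snd oc')"
      show "ht ?G (Suc k) - ht g (Suc k) = ht (snd (\<phi> oc')) (Suc k - fst oc') - ht (fst (\<phi> oc')) (Suc k - fst oc')"
      proof (cases "oc' = oc")
        case True thus ?thesis using Delta pla by simp
      next
        case False
        have "\<not> ho oc' k" using ho_unique[OF oc oc' hk] False by auto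
        hence p': "fst oc' = Suc k" using c by (auto simp: ho_def)
        have "\<not> ho oc (Suc k)"
        proof
          assume "ho oc (Suc k)"
          moreover have "ho oc' (Suc k)" using p' gc_lpos[OF oc'] by (simp add: ho_def)
          ultimately show False using ho_unique[OF oc oc'] False by auto
        qed
        hence "Suc k = p + l" using pk pla by (auto simp: ho_def)
        thus ?thesis using Delta endz p' by simp
      qed
    next
      assume n: "\<forall>oc\<in>Occ. \<not> ins oc (Suc k)"
      hence "\<not> ins oc (Suc k)" using oc by blast
      hence "Suc k = p + l" using pk pla by (auto simp: ins_def)
      thus "ht ?G (Suc k) = ht g (Suc k)" using Delta endz by simp
    qed
  next
    case False
    have Gk: "?G ! k = g ! k" using Phi_nth_out[OF False k] .
    have "\<forall>oc\<in>Occ. \<not> ins oc k" using False ins_ho by blast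
    hence e: "ht ?G k = ht g k" using IH2 by simp
    have e2: "ht ?G (Suc k) = ht g (Suc k)" using hG hg Gk e by simp
    show ?thesis
    proof (intro conjI ballI impI)
      fix oc' assume oc': "oc' \<in> Occ" and c: "fst oc' \<le> Suc k \<and> Suc k \<le> fst oc' + fst (snd oc')"
      have "\<not> ho oc' k" using False oc' by blast
      hence "fst oc' = Suc k" using c by (auto simp: ho_def)
      thus "ht ?G (Suc k) - ht g (Suc k) = ht (snd (\<phi> oc')) (Suc k - fst oc') - ht (fst (\<phi> oc')) (Suc k - fst oc')"
        using e2 by simp
    next
      show "ht ?G (Suc k) = ht g (Suc k)" by (rule e2)
    qed
  qed
qed

lemma ht_Phi_in:
  assumes oc: "oc \<in> Occ" and k: "fst oc \<le> k" "k \<le> fst oc + fst (snd oc)"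
  shows "ht (Phi g Occ \<phi>) k = ht g (fst oc) + ht (snd (\<phi> oc)) (k - fst oc)"
proof -
  have bnd: "fst oc + fst (snd oc) \<le> length g" by (rule gc_bound[OF oc])
  have kl: "k \<le> length g" using k bnd by simp
  have d: "ht (Phi g Occ \<phi>) k - ht g k = ht (snd (\<phi> oc)) (k - fst oc) - ht (fst (\<phi> oc)) (k - fst oc)"
    using ht_Phi_main[OF kl] oc k by blast
  have "ht g (fst oc + (k - fst oc)) = ht g (fst oc) + ht (factor g (fst oc) (fst (snd oc))) (k - fst oc)"
    by (rule ht_factor[OF bnd]) (use k in simp)
  hence "ht g k = ht g (fst oc) + ht (fst (\<phi> oc)) (k - fst oc)" using k gc_lb[OF oc] by simp
  thus ?thesis using d by simp
qed

lemma ht_Phi_out: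
  assumes "k \<le> length g" "\<forall>oc\<in>Occ. \<not> ins oc k"
  shows "ht (Phi g Occ \<phi>) k = ht g k"
  using ht_Phi_main[OF assms(1)] assms(2) by blast

lemma ht_g_in:
  assumes oc: "oc \<in> Occ" and k: "fst oc \<le> k" "k \<le> fst oc + fst (snd oc)"
  shows "ht g k = ht g (fst oc) + ht (fst (\<phi> oc)) (k - fst oc)"
proof -
  have bnd: "fst oc + fst (snd oc) \<le> length g" by (rule gc_bound[OF oc])
  have "ht g (fst oc + (k - fst oc)) = ht g (fst oc) + ht (factor g (fst oc) (fst (snd oc))) (k - fst oc)"
    by (rule ht_factor[OF bnd]) (use k in simp)
  thus ?thesis using k gc_lb[OF oc] by simp
qed

lemma ht_Phi_pos:
  assumes k: "k \<le> length g"
  shows "ht g k < ht (Phi g Occ \<phi>) k \<longleftrightarrow> (\<exists>oc\<in>Occ. ins oc k)"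
proof
  assume "ht g k < ht (Phi g Occ \<phi>) k"
  thus "\<exists>oc\<in>Occ. ins oc k" using ht_Phi_out[OF k] by force
next
  assume "\<exists>oc\<in>Occ. ins oc k"
  then obtain oc where oc: "oc \<in> Occ" and i: "ins oc k" by blast
  have S: "(fst (\<phi> oc), snd (\<phi> oc)) \<in> SkFS" by (rule gc_PQ[OF oc])
  have kk: "fst oc \<le> k" "k \<le> fst oc + fst (snd oc)" using i by (auto simp: ins_def)
  have "ht (fst (\<phi> oc)) (k - fst oc) < ht (snd (\<phi> oc)) (k - fst oc)"
    using skfs_ht_lt[OF S] i gc_lenP[OF oc] by (auto simp: ins_def)
  thus "ht g k < ht (Phi g Occ \<phi>) k" using ht_Phi_in[OF oc kk] ht_g_in[OF oc kk] by simp
qed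

lemma ht_Phi_ge:
  assumes k: "k \<le> length g"
  shows "ht g k \<le> ht (Phi g Occ \<phi>) k"
  using ht_Phi_pos[OF k] ht_Phi_out[OF k] by force

lemma Phi_dyck:
  assumes g: "g \<in> dyck n"
  shows "Phi g Occ \<phi> \<in> dyck n"
proof -
  have "\<forall>oc\<in>Occ. \<not> ins oc (length g)" using gc_bound by (fastforce simp: ins_def)
  hence e: "ht (Phi g Occ \<phi>) (length g) = 0" using ht_Phi_out[of "length g"] dyck_end[OF g] by simp
  have "\<forall>k\<le>length g. ht (Phi g Occ \<phi>) k \<ge> 0"
    using ht_Phi_ge dyck_nonneg[OF g] by (meson order_trans)
  thus ?thesis using e g by (simp add: dyck_def)
qed

lemma Phi_le: "dyck_le g (Phi g Occ \<phi>)"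
  using ht_Phi_ge by (simp add: dyck_le_def)

lemma factor_Phi:
  assumes oc: "oc \<in> Occ"
  shows "factor (Phi g Occ \<phi>) (fst oc) (fst (snd oc)) = snd (\<phi> oc)"
proof (rule nth_equalityI)
  have bnd: "fst oc + fst (snd oc) \<le> length (Phi g Occ \<phi>)" using gc_bound[OF oc] by simp
  show "length (factor (Phi g Occ \<phi>) (fst oc) (fst (snd oc))) = length (snd (\<phi> oc))"
    using length_factor[OF bnd] gc_lenQ[OF oc] by simp
  fix i assume i: "i < length (factor (Phi g Occ \<phi>) (fst oc) (fst (snd oc)))"
  hence il: "i < fst (snd oc)" using length_factor[OF bnd] by simp
  have "factor (Phi g Occ \<phi>) (fst oc) (fst (snd oc)) ! i = Phi g Occ \<phi> ! (fst oc + i)"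
    using nth_factor[OF bnd il] .
  also have "\<dots> = snd (\<phi> oc) ! i" using Phi_nth_in[OF oc, of "fst oc + i"] il by (simp add: ho_def)
  finally show "factor (Phi g Occ \<phi>) (fst oc) (fst (snd oc)) ! i = snd (\<phi> oc) ! i" .
qed

end


fun tau :: "nat \<Rightarrow> int \<Rightarrow> nat \<times> int \<Rightarrow> nat \<times> int" where
  "tau p c (k, v) = (p + k, c + v)"

lemma multinomial_cong:
  "(\<And>i. i \<in> I \<Longrightarrow> a i = b i) \<Longrightarrow> multinomial h a I = multinomial h b I"
  unfolding multinomial_def by (metis (mono_tags, lifting) prod.cong)

context
  fixes g Occ \<phi>
  assumes gc: "goodconf g Occ \<phi>"
begin

abbreviation "G \<equiv> Phi g Occ \<phi>"

lemma region_Union: "region g G = (\<Union>oc\<in>Occ. Rg g G oc)"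
proof
  show "region g G \<subseteq> (\<Union>oc\<in>Occ. Rg g G oc)"
  proof
    fix c assume c: "c \<in> region g G"
    obtain m v where mv: "c = (m, v)" by (cases c)
    have m: "m \<le> length g" and lt: "ht g m < ht G m" using c mv by (auto simp: region_def)
    then obtain oc where "oc \<in> Occ" "ins oc m" using ht_Phi_pos[OF gc m] by blast
    thus "c \<in> (\<Union>oc\<in>Occ. Rg g G oc)" using c mv by (auto simp: Rg_def)
  qed
qed (auto simp: Rg_def)

lemma Rg_disj: "oc \<in> Occ \<Longrightarrow> oc' \<in> Occ \<Longrightarrow> oc \<noteq> oc' \<Longrightarrow> Rg g G oc \<inter> Rg g G oc' = {}"
  using ho_unique[OF gc] ins_ho[OF gc] unfolding Rg_def by blast

lemma Rg_norel:
  assumes oc: "oc \<in> Occ" and oc': "oc' \<in> Occ" and ne: "oc \<noteq> oc'"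
    and a: "a \<in> Rg g G oc" and b: "b \<in> Rg g G oc'"
  shows "\<not> rD a b"
proof
  assume r: "rD a b"
  obtain m v where av: "a = (m, v)" by (cases a)
  obtain m' v' where bv: "b = (m', v')" by (cases b)
  have i1: "ins oc m" and i2: "ins oc' m'" using a b av bv by (auto simp: Rg_def)
  have "m' = Suc m \<or> Suc m' = m" using r av bv by simp
  thus False
  proof
    assume e: "m' = Suc m"
    have "ho oc m" using i1 by (rule ins_ho[OF gc])
    moreover have "ho oc' m" using i2 e by (auto simp: ins_def ho_def)
    ultimately show False using ho_unique[OF gc oc oc'] ne by blast
  next
    assume e: "Suc m' = m"
    have "ho oc' m'" using i2 by (rule ins_ho[OF gc])
    moreover have "ho oc m'" using i1 e by (auto simp: ins_def ho_def)
    ultimately show False using ho_unique[OF gc oc oc'] ne by blast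
  qed
qed

lemma Rg_bij:
  assumes oc: "oc \<in> Occ"
  shows "bij_betw (tau (fst oc) (ht g (fst oc))) (ShR (fst (\<phi> oc)) (snd (\<phi> oc))) (Rg g G oc)"
proof (rule bij_betw_imageI)
  show "inj_on (tau (fst oc) (ht g (fst oc))) (ShR (fst (\<phi> oc)) (snd (\<phi> oc)))"
  proof (rule inj_onI)
    fix a b assume "tau (fst oc) (ht g (fst oc)) a = tau (fst oc) (ht g (fst oc)) b"
    thus "a = b" by (cases a, cases b) auto
  qed
  let ?p = "fst oc" and ?l = "fst (snd oc)" and ?c = "ht g (fst oc)"
  let ?P = "fst (\<phi> oc)" and ?Q = "snd (\<phi> oc)"
  have lP: "length ?P = ?l" by (rule gc_lenP[OF gc oc])
  have bnd: "?p + ?l \<le> length g" by (rule gc_bound[OF gc oc])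
  show "tau ?p ?c ` ShR ?P ?Q = Rg g G oc"
  proof
    show "tau ?p ?c ` ShR ?P ?Q \<subseteq> Rg g G oc"
    proof
      fix z assume "z \<in> tau ?p ?c ` ShR ?P ?Q"
      then obtain k v where kv: "(k, v) \<in> ShR ?P ?Q" and z: "z = (?p + k, ?c + v)" by auto
      have k: "0 < k" "k < ?l" "ht ?P k \<le> v" "v < ht ?Q k" "even (v - ht ?P k)"
        using kv lP by (auto simp: ShR_def)
      have kk: "?p \<le> ?p + k" "?p + k \<le> ?p + ?l" using k by auto
      have h1: "ht g (?p + k) = ?c + ht ?P k" using ht_g_in[OF gc oc kk] by simp
      have h2: "ht G (?p + k) = ?c + ht ?Q k" using ht_Phi_in[OF gc oc kk] by simp
      have "even (?c + v - ht g (?p + k))" using h1 k(5) by simp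
      moreover have "?p + k \<le> length g" using bnd k by simp
      ultimately have "(?p + k, ?c + v) \<in> region g G" using h1 h2 k by (simp add: region_def)
      moreover have "ins oc (?p + k)" using k by (simp add: ins_def)
      ultimately show "z \<in> Rg g G oc" using z by (simp add: Rg_def)
    qed
    show "Rg g G oc \<subseteq> tau ?p ?c ` ShR ?P ?Q"
    proof
      fix z assume z: "z \<in> Rg g G oc"
      obtain m v where mv: "z = (m, v)" by (cases z)
      have i: "ins oc m" and r: "(m, v) \<in> region g G" using z mv by (auto simp: Rg_def)
      define k where "k = m - ?p"
      have m: "m = ?p + k" "0 < k" "k < ?l" using i by (auto simp: ins_def k_def)
      have kk: "?p \<le> ?p + k" "?p + k \<le> ?p + ?l" using m by auto
      have h1: "ht g (?p + k) = ?c + ht ?P k" using ht_g_in[OF gc oc kk] by simp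
      have h2: "ht G (?p + k) = ?c + ht ?Q k" using ht_Phi_in[OF gc oc kk] by simp
      have rr: "ht g m \<le> v" "v < ht G m" "even (v - ht g m)" using r by (auto simp: region_def)
      have "even ((v - ?c) - ht ?P k)" using rr(3) h1 m(1) by (simp add: algebra_simps)
      hence "(k, v - ?c) \<in> ShR ?P ?Q" using rr h1 h2 m lP by (simp add: ShR_def)
      moreover have "tau ?p ?c (k, v - ?c) = z" using mv m by simp
      ultimately show "z \<in> tau ?p ?c ` ShR ?P ?Q" by (metis imageI)
    qed
  qed
qed

lemma Rg_card: "oc \<in> Occ \<Longrightarrow> card (Rg g G oc) = area (\<phi> oc)"
proof -
  assume oc: "oc \<in> Occ"
  have "card (Rg g G oc) = card (ShR (fst (\<phi> oc)) (snd (\<phi> oc)))"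
    using bij_betw_same_card[OF Rg_bij[OF oc]] by simp
  also have "\<dots> = area (fst (\<phi> oc), snd (\<phi> oc))" using area_ShR[OF gc_PQ[OF gc oc]] by simp
  finally show ?thesis by simp
qed

lemma Rg_t: "oc \<in> Occ \<Longrightarrow> card (linext (Rg g G oc) rD) = t (\<phi> oc)"
proof -
  assume oc: "oc \<in> Occ"
  have "card (linext (ShR (fst (\<phi> oc)) (snd (\<phi> oc))) rD) = card (linext (Rg g G oc) rD)"
  proof (rule linext_iso[OF Rg_bij[OF oc]])
    show "\<forall>c\<in>ShR (fst (\<phi> oc)) (snd (\<phi> oc)). \<forall>c'\<in>ShR (fst (\<phi> oc)) (snd (\<phi> oc)).
       rD c c' = rD (tau (fst oc) (ht g (fst oc)) c) (tau (fst oc) (ht g (fst oc)) c')"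
    proof (intro ballI)
      fix c c' :: "nat \<times> int"
      obtain k v where "c = (k, v)" by (cases c)
      moreover obtain k' v' where "c' = (k', v')" by (cases c')
      ultimately show "rD c c' = rD (tau (fst oc) (ht g (fst oc)) c) (tau (fst oc) (ht g (fst oc)) c')"
        by auto
    qed
  qed
  moreover have "t (\<phi> oc) = card (linext (ShR (fst (\<phi> oc)) (snd (\<phi> oc))) rD)"
    using t_ShR[OF gc_PQ[OF gc oc]] by simp
  ultimately show ?thesis by simp
qed

lemma E_Phi:
  "E g G = multinomial (\<Sum>oc\<in>Occ. area (\<phi> oc)) (\<lambda>oc. area (\<phi> oc)) Occ * (\<Prod>oc\<in>Occ. t (\<phi> oc))"
proof -
  have fin: "finite Occ" by (rule gc_fin[OF gc])
  have "E g G = card (linext (\<Union>oc\<in>Occ. Rg g G oc) rD)" unfolding E_def region_Union ..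
  also have "\<dots> = multinomial (\<Sum>oc\<in>Occ. card (Rg g G oc)) (\<lambda>oc. card (Rg g G oc)) Occ *
                  (\<Prod>oc\<in>Occ. card (linext (Rg g G oc) rD))"
  proof (rule linext_family[OF fin])
    show "\<forall>i\<in>Occ. finite (Rg g G i)"
      using finite_region[of g G] by (auto simp: Rg_def)
    show "\<forall>i\<in>Occ. \<forall>j\<in>Occ. i \<noteq> j \<longrightarrow> Rg g G i \<inter> Rg g G j = {}" using Rg_disj by blast
    show "\<forall>i\<in>Occ. \<forall>j\<in>Occ. i \<noteq> j \<longrightarrow> (\<forall>a\<in>Rg g G i. \<forall>b\<in>Rg g G j. \<not> rD a b)"
      using Rg_norel by blast
  qed
  also have "(\<Sum>oc\<in>Occ. card (Rg g G oc)) = (\<Sum>oc\<in>Occ. area (\<phi> oc))"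
    by (rule sum.cong[OF refl]) (rule Rg_card)
  also have "multinomial (\<Sum>oc\<in>Occ. area (\<phi> oc)) (\<lambda>oc. card (Rg g G oc)) Occ =
             multinomial (\<Sum>oc\<in>Occ. area (\<phi> oc)) (\<lambda>oc. area (\<phi> oc)) Occ"
    by (rule multinomial_cong) (rule Rg_card)
  also have "(\<Prod>oc\<in>Occ. card (linext (Rg g G oc) rD)) = (\<Prod>oc\<in>Occ. t (\<phi> oc))"
    by (rule prod.cong[OF refl]) (rule Rg_t)
  finally show ?thesis .
qed

lemma card_region_Phi: "card (region g G) = (\<Sum>oc\<in>Occ. area (\<phi> oc))"
proof -
  have "card (region g G) = card (\<Union>oc\<in>Occ. Rg g G oc)" unfolding region_Union ..
  also have "\<dots> = (\<Sum>oc\<in>Occ. card (Rg g G oc))"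
    by (rule card_UN_disjoint) (use gc_fin[OF gc] finite_region[of g G] Rg_disj in \<open>auto simp: Rg_def\<close>)
  also have "\<dots> = (\<Sum>oc\<in>Occ. area (\<phi> oc))" by (rule sum.cong[OF refl]) (rule Rg_card)
  finally show ?thesis .
qed

end


definition run :: "step list \<Rightarrow> step list \<Rightarrow> nat \<Rightarrow> nat \<Rightarrow> bool" where
  "run g g' p l \<longleftrightarrow> 2 \<le> l \<and> p + l \<le> length g \<and> ht g p = ht g' p \<and> ht g (p + l) = ht g' (p + l) \<and>
     (\<forall>k. p < k \<and> k < p + l \<longrightarrow> ht g k < ht g' k)"

lemma run_overlap:
  assumes r: "run g g' p l" and r': "run g g' p' l'" and ov: "p' < p + l" "p < p' + l'"
  shows "p = p' \<and> l = l'"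
proof -
  have a: "\<not> (p < p' \<and> p' < p + l)" using r r' unfolding run_def by (metis less_irrefl)
  have b: "\<not> (p' < p \<and> p < p' + l')" using r r' unfolding run_def by (metis less_irrefl)
  have pp: "p = p'" using a b ov by linarith
  have c: "\<not> (l < l')" using r r' pp unfolding run_def by (metis add_less_cancel_left less_add_same_cancel1 less_irrefl less_le_trans nat_less_le zero_less_numeral)
  have d: "\<not> (l' < l)" using r r' pp unfolding run_def by (metis add_less_cancel_left less_add_same_cancel1 less_irrefl less_le_trans nat_less_le zero_less_numeral)
  show ?thesis using pp c d by simp
qed

lemma skfs_len2:
  assumes S: "(P, Q) \<in> SkFS" shows "2 \<le> length P"
proof (rule ccontr)
  assume "\<not> 2 \<le> length P"
  moreover have "length P \<noteq> 0" using skfs_D(3)[OF S] by simp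
  ultimately have "length P = 1" by arith
  moreover have "length Q = length P" using skfs_D(1)[OF S] by simp
  ultimately obtain a b where "P = [a]" "Q = [b]" by (metis One_nat_def length_0_conv length_Suc_conv)
  thus False using skfs_D(2,4,5)[OF S] by simp
qed

lemma gc_run:
  assumes gc: "goodconf g Occ \<phi>" and oc: "oc \<in> Occ"
  shows "run g (Phi g Occ \<phi>) (fst oc) (fst (snd oc))"
proof -
  let ?G = "Phi g Occ \<phi>" and ?p = "fst oc" and ?l = "fst (snd oc)"
  have bnd: "?p + ?l \<le> length g" by (rule gc_bound[OF gc oc])
  have l2: "2 \<le> ?l" using skfs_len2[OF gc_PQ[OF gc oc]] gc_lenP[OF gc oc] by simp
  have in1: "\<forall>k. ?p < k \<and> k < ?p + ?l \<longrightarrow> ht g k < ht ?G k"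
    using ht_Phi_pos[OF gc] oc bnd by (auto simp: ins_def)
  have e1: "ht g ?p = ht ?G ?p"
  proof -
    have "\<forall>oc'\<in>Occ. \<not> ins oc' ?p"
    proof (intro ballI notI)
      fix oc' assume oc': "oc' \<in> Occ" and i: "ins oc' ?p"
      have "ho oc' ?p" using i by (rule ins_ho[OF gc])
      moreover have "ho oc ?p" using l2 by (simp add: ho_def)
      ultimately have "oc' = oc" using ho_unique[OF gc oc' oc] by blast
      thus False using i by (simp add: ins_def)
    qed
    thus ?thesis using ht_Phi_out[OF gc] bnd by simp
  qed
  have e2: "ht g (?p + ?l) = ht ?G (?p + ?l)"
  proof -
    have "\<forall>oc'\<in>Occ. \<not> ins oc' (?p + ?l)"
    proof (intro ballI notI)
      fix oc' assume oc': "oc' \<in> Occ" and i: "ins oc' (?p + ?l)"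
      have "ho oc' (?p + ?l - 1)" using i l2 by (auto simp: ins_def ho_def)
      moreover have "ho oc (?p + ?l - 1)" using l2 by (auto simp: ho_def)
      ultimately have "oc' = oc" using ho_unique[OF gc oc' oc] by blast
      thus False using i by (simp add: ins_def)
    qed
    thus ?thesis using ht_Phi_out[OF gc] bnd by simp
  qed
  show ?thesis using l2 bnd e1 e2 in1 by (simp add: run_def)
qed

lemma gc_phi_eq:
  assumes gc: "goodconf g Occ \<phi>" and oc: "oc \<in> Occ"
  shows "\<phi> oc = (factor g (fst oc) (fst (snd oc)), factor (Phi g Occ \<phi>) (fst oc) (fst (snd oc)))"
  using gc_lb[OF gc oc] factor_Phi[OF gc oc] by (metis prod.collapse)

lemma Phi_inj:
  assumes gc1: "goodconf g O1 f1" and gc2: "goodconf g O2 f2"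
    and e1: "f1 \<in> extensional O1" and e2: "f2 \<in> extensional O2"
    and eq: "Phi g O1 f1 = Phi g O2 f2"
  shows "O1 = O2 \<and> f1 = f2"
proof -
  let ?G = "Phi g O1 f1"
  have sub: "oc \<in> Ob \<and> fb oc = fa oc"
    if gca: "goodconf g Oa fa" and gcb: "goodconf g Ob fb" and eqab: "Phi g Oa fa = Phi g Ob fb"
       and oc: "oc \<in> Oa" for Oa Ob fa fb oc
  proof -
    obtain p l a where pla: "oc = (p, l, a)" by (cases oc) auto
    have ra: "run g (Phi g Oa fa) p l" using gc_run[OF gca oc] pla by simp
    have l2: "2 \<le> l" using ra by (simp add: run_def)
    have bnd: "p + l \<le> length g" using ra by (simp add: run_def)
    have "ht g (p + 1) < ht (Phi g Ob fb) (p + 1)" using ra l2 eqab by (simp add: run_def)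
    then obtain ob where ob: "ob \<in> Ob" and i: "ins ob (p + 1)" using ht_Phi_pos[OF gcb, of "p + 1"] bnd l2 by auto
    have rb: "run g (Phi g Ob fb) (fst ob) (fst (snd ob))" by (rule gc_run[OF gcb ob])
    have "p = fst ob \<and> l = fst (snd ob)"
      using run_overlap[OF ra[unfolded eqab] rb] i l2 by (auto simp: ins_def)
    hence pl: "fst ob = p" "fst (snd ob) = l" by auto
    have fb: "fb ob = (factor g p l, factor (Phi g Ob fb) p l)" using gc_phi_eq[OF gcb ob] pl by simp
    have fa: "fa oc = (factor g p l, factor (Phi g Oa fa) p l)" using gc_phi_eq[OF gca oc] pla by simp
    have fab: "fb ob = fa oc" using fa fb eqab by simp
    have "snd (snd ob) = a"
      using gc_area[OF gcb ob] gc_area[OF gca oc] fab pla by simp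
    hence "ob = oc" using pl pla by (metis prod.collapse)
    thus ?thesis using ob fab by simp
  qed
  have s1: "O1 \<subseteq> O2" using sub[OF gc1 gc2 eq] by blast
  have s2: "O2 \<subseteq> O1" using sub[OF gc2 gc1 eq[symmetric]] by blast
  have O: "O1 = O2" using s1 s2 by blast
  have "\<forall>x. f1 x = f2 x"
  proof
    fix x show "f1 x = f2 x"
    proof (cases "x \<in> O1")
      case True thus ?thesis using sub[OF gc1 gc2 eq True] by simp
    next
      case False
      have "x \<notin> O2" using False O by simp
      thus ?thesis using extensional_arb[OF e1 False] extensional_arb[OF e2] by simp
    qed
  qed
  thus ?thesis using O by auto
qed


definition OccR :: "step list \<Rightarrow> step list \<Rightarrow> (nat \<times> nat \<times> nat) set" where
  "OccR g g' = (\<lambda>(p, l). (p, l, area (factor g p l, factor g' p l))) ` {(p, l). run g g' p l}"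

definition phiR :: "step list \<Rightarrow> step list \<Rightarrow> nat \<times> nat \<times> nat \<Rightarrow> step list \<times> step list" where
  "phiR g g' = (\<lambda>oc. if oc \<in> OccR g g' then (factor g (fst oc) (fst (snd oc)), factor g' (fst oc) (fst (snd oc))) else undefined)"

lemma ht_pm1: "k < length w \<Longrightarrow> ht w (Suc k) - ht w k = 1 \<or> ht w (Suc k) - ht w k = -1"
  using ht_step by force

lemma run_skfs:
  assumes r: "run g g' p l" and len: "length g = length g'"
  shows "(factor g p l, factor g' p l) \<in> SkFS"
proof -
  let ?P = "factor g p l" and ?Q = "factor g' p l"
  have l2: "2 \<le> l" and bnd: "p + l \<le> length g" and e0: "ht g p = ht g' p"
    and el: "ht g (p + l) = ht g' (p + l)" and inn: "\<forall>k. p < k \<and> k < p + l \<longrightarrow> ht g k < ht g' k"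
    using r by (auto simp: run_def)
  have bnd': "p + l \<le> length g'" using bnd len by simp
  have lP: "length ?P = l" by (rule length_factor[OF bnd])
  have lQ: "length ?Q = l" by (rule length_factor[OF bnd'])
  have hP: "\<And>k. k \<le> l \<Longrightarrow> ht ?P k = ht g (p + k) - ht g p" using ht_factor[OF bnd] by simp
  have hQ: "\<And>k. k \<le> l \<Longrightarrow> ht ?Q k = ht g' (p + k) - ht g' p" using ht_factor[OF bnd'] by simp
  have hlt: "\<And>k. 0 < k \<Longrightarrow> k < l \<Longrightarrow> ht ?P k < ht ?Q k" using hP hQ inn e0 by simp
  have cD: "\<And>k. k \<le> l \<Longrightarrow> int (cnt D (take k ?P)) - int (cnt D (take k ?Q)) = (ht ?Q k - ht ?P k) div 2"
  proof -
    fix k assume k: "k \<le> l"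
    have "ht ?P k = int k - 2 * int (cnt D (take k ?P))" using ht_alt[of k ?P] k lP by simp
    moreover have "ht ?Q k = int k - 2 * int (cnt D (take k ?Q))" using ht_alt[of k ?Q] k lQ by simp
    ultimately show "int (cnt D (take k ?P)) - int (cnt D (take k ?Q)) = (ht ?Q k - ht ?P k) div 2" by simp
  qed
  have c1: "cnt D ?P = cnt D ?Q"
  proof -
    have "ht ?P l = ht ?Q l" using hP hQ e0 el by simp
    hence "int (cnt D (take l ?P)) - int (cnt D (take l ?Q)) = 0" using cD[of l] by simp
    thus ?thesis using lP lQ by simp
  qed
  have c2: "\<forall>k. 0 < k \<and> k < length ?P \<longrightarrow> cnt D (take k ?P) > cnt D (take k ?Q)"
  proof (intro allI impI)
    fix k assume k: "0 < k \<and> k < length ?P"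
    have lt: "ht ?P k < ht ?Q k" using hlt k lP by simp
    have "ht ?P k = int k - 2 * int (cnt D (take k ?P))" using ht_alt[of k ?P] k by simp
    moreover have "ht ?Q k = int k - 2 * int (cnt D (take k ?Q))" using ht_alt[of k ?Q] k lP lQ by simp
    ultimately have "int (cnt D (take k ?Q)) < int (cnt D (take k ?P))" using lt by simp
    thus "cnt D (take k ?P) > cnt D (take k ?Q)" by simp
  qed
  have h1: "ht ?P 1 < ht ?Q 1" using hlt l2 by simp
  have sP: "ht ?P 1 - ht ?P 0 = 1 \<or> ht ?P 1 - ht ?P 0 = -1" using ht_pm1[of 0 ?P] lP l2 by simp
  have sQ: "ht ?Q 1 - ht ?Q 0 = 1 \<or> ht ?Q 1 - ht ?Q 0 = -1" using ht_pm1[of 0 ?Q] lQ l2 by simp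
  have P1: "ht ?P 1 = -1" and Q1: "ht ?Q 1 = 1" using sP sQ h1 by auto
  have nP: "?P ! 0 = D" using nth_from_ht[of 0 ?P] lP l2 P1 by simp
  have nQ: "?Q ! 0 = U" using nth_from_ht[of 0 ?Q] lQ l2 Q1 by simp
  have neP: "?P \<noteq> []" and neQ: "?Q \<noteq> []" using lP lQ l2 by auto
  have "hd ?P = D" using nP neP by (simp add: hd_conv_nth)
  moreover have "hd ?Q = U" using nQ neQ by (simp add: hd_conv_nth)
  ultimately show ?thesis using lP lQ c1 c2 neP neQ by (simp add: SkFS_def)
qed

lemma run_exists:
  assumes g: "g \<in> dyck n" and g': "g' \<in> dyck n" and le: "dyck_le g g'"
    and k: "k \<le> length g" and lt: "ht g k < ht g' k"
  shows "\<exists>p l. run g g' p l \<and> p < k \<and> k < p + l"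
proof -
  have len: "length g = length g'" by (rule dyck_same_length[OF g g'])
  have le': "\<And>j. j \<le> length g \<Longrightarrow> ht g j \<le> ht g' j" using le by (simp add: dyck_le_def)
  let ?L = "{j. j \<le> k \<and> ht g j = ht g' j}"
  let ?R = "{j. k \<le> j \<and> j \<le> length g \<and> ht g j = ht g' j}"
  have L0: "0 \<in> ?L" by simp
  have fL: "finite ?L" by simp
  have R0: "length g \<in> ?R" using k dyck_end[OF g] dyck_end[OF g'] len by simp
  have fR: "finite ?R" by simp
  define p where "p = Max ?L"
  define q where "q = Min ?R"
  have pL: "p \<in> ?L" unfolding p_def using fL L0 by (intro Max_in) auto
  have qR: "q \<in> ?R" unfolding q_def using fR R0 by (intro Min_in) auto
  have pk: "p < k" using pL lt by (cases "p = k") auto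
  have kq: "k < q" using qR lt by (cases "q = k") auto
  have between: "\<And>j. p < j \<Longrightarrow> j < q \<Longrightarrow> ht g j < ht g' j"
  proof -
    fix j assume a: "p < j" "j < q"
    have jl: "j \<le> length g" using a qR by simp
    show "ht g j < ht g' j"
    proof (cases "j \<le> k")
      case True
      have "j \<notin> ?L" using a(1) fL p_def by (metis (no_types, lifting) Max_ge not_le)
      thus ?thesis using True le'[OF jl] by auto
    next
      case False
      have "j \<notin> ?R" using a(2) fR q_def by (metis (no_types, lifting) Min_le not_le)
      thus ?thesis using False jl le'[OF jl] by auto
    qed
  qed
  have "run g g' p (q - p)" unfolding run_def
    using pk kq pL qR between by auto
  thus ?thesis using pk kq by (intro exI[of _ p] exI[of _ "q - p"]) simp
qed

context
  fixes g g' n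
  assumes g: "g \<in> dyck n" and g': "g' \<in> dyck n" and le: "dyck_le g g'"
begin

lemma len_gg: "length g = length g'" by (rule dyck_same_length[OF g g'])

lemma OccR_mem: "oc \<in> OccR g g' \<longleftrightarrow> run g g' (fst oc) (fst (snd oc)) \<and>
     snd (snd oc) = area (factor g (fst oc) (fst (snd oc)), factor g' (fst oc) (fst (snd oc)))"
  unfolding OccR_def by (cases oc) auto

lemma goodconf_R: "goodconf g (OccR g g') (phiR g g')"
proof -
  have fin: "finite (OccR g g')"
  proof -
    have "{(p, l). run g g' p l} \<subseteq> {..length g} \<times> {..length g}" by (auto simp: run_def)
    hence "finite {(p, l). run g g' p l}" by (rule finite_subset) simp
    thus ?thesis unfolding OccR_def by simp
  qed
  have bnd: "\<forall>oc\<in>OccR g g'. fst oc + fst (snd oc) \<le> length g" using OccR_mem by (auto simp: run_def)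
  have disj: "\<forall>oc\<in>OccR g g'. \<forall>oc'\<in>OccR g g'. oc \<noteq> oc' \<longrightarrow>
      fst oc + fst (snd oc) \<le> fst oc' \<or> fst oc' + fst (snd oc') \<le> fst oc"
  proof (intro ballI impI)
    fix oc oc' assume oc: "oc \<in> OccR g g'" and oc': "oc' \<in> OccR g g'" and ne: "oc \<noteq> oc'"
    show "fst oc + fst (snd oc) \<le> fst oc' \<or> fst oc' + fst (snd oc') \<le> fst oc"
    proof (rule ccontr)
      assume "\<not> (fst oc + fst (snd oc) \<le> fst oc' \<or> fst oc' + fst (snd oc') \<le> fst oc)"
      hence ov: "fst oc' < fst oc + fst (snd oc)" "fst oc < fst oc' + fst (snd oc')" by auto
      have "fst oc = fst oc' \<and> fst (snd oc) = fst (snd oc')"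
        using run_overlap[OF _ _ ov] OccR_mem oc oc' by blast
      hence "oc = oc'" using OccR_mem oc oc' by (metis prod.collapse)
      thus False using ne by simp
    qed
  qed
  have ph: "\<forall>oc\<in>OccR g g'. phiR g g' oc \<in> SkFS \<and> fst (phiR g g' oc) = factor g (fst oc) (fst (snd oc)) \<and>
      area (phiR g g' oc) = snd (snd oc)"
    using OccR_mem run_skfs len_gg by (auto simp: phiR_def)
  show ?thesis using fin bnd disj ph by (simp add: goodconf_def)
qed

lemma phiR_ext: "phiR g g' \<in> extensional (OccR g g')"
  by (simp add: phiR_def extensional_def)

lemma Phi_R: "Phi g (OccR g g') (phiR g g') = g'"
proof (rule nth_equalityI)
  have gc: "goodconf g (OccR g g') (phiR g g')" by (rule goodconf_R)
  show "length (Phi g (OccR g g') (phiR g g')) = length g'" using len_gg length_Phi[OF gc] by simp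
  fix i assume i: "i < length (Phi g (OccR g g') (phiR g g'))"
  hence il: "i < length g" using length_Phi[OF gc] by simp
  show "Phi g (OccR g g') (phiR g g') ! i = g' ! i"
  proof (cases "\<exists>oc\<in>OccR g g'. ho oc i")
    case True
    then obtain oc where oc: "oc \<in> OccR g g'" and h: "ho oc i" by blast
    have b: "fst oc + fst (snd oc) \<le> length g'" using gc_bound[OF gc oc] len_gg by simp
    have "Phi g (OccR g g') (phiR g g') ! i = factor g' (fst oc) (fst (snd oc)) ! (i - fst oc)"
      using Phi_nth_in[OF gc oc h] oc by (simp add: phiR_def)
    also have "\<dots> = g' ! i"
    proof -
      have h2: "i - fst oc < fst (snd oc)" "fst oc \<le> i" using h unfolding ho_def by linarith+
      thus ?thesis using nth_factor[OF b h2(1)] by simp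
    qed
    finally show ?thesis .
  next
    case False
    have e: "ht g j = ht g' j" if j: "j = i \<or> j = Suc i" for j
    proof (rule ccontr)
      assume ne: "ht g j \<noteq> ht g' j"
      have jl: "j \<le> length g" using j il by auto
      have "ht g j < ht g' j" using ne le jl by (simp add: dyck_le_def order_le_neq_trans)
      then obtain p l where r: "run g g' p l" and pj: "p < j" "j < p + l"
        using run_exists[OF g g' le jl] by blast
      let ?oc = "(p, l, area (factor g p l, factor g' p l))"
      have "?oc \<in> OccR g g'" using r OccR_mem by simp
      moreover have "ho ?oc i" using pj j by (auto simp: ho_def)
      ultimately show False using False by blast
    qed
    have "g ! i = g' ! i" using nth_from_ht[of i g] nth_from_ht[of i g'] il len_gg e by simp
    thus ?thesis using Phi_nth_out[OF gc False il] by simp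
  qed
qed

end


lemma length_le_sum_list: "0 \<notin> set xs \<Longrightarrow> length xs \<le> sum_list (xs :: nat list)"
  by (induction xs) auto

lemma finite_partitions: "finite (partitions h)"
proof -
  have "partitions h \<subseteq> {xs. set xs \<subseteq> {..h} \<and> length xs \<le> h}"
    using member_le_sum_list length_le_sum_list by (fastforce simp: partitions_def)
  moreover have "finite {xs. set xs \<subseteq> {..h} \<and> length xs \<le> h}"
    by (rule finite_lists_length_le) simp
  ultimately show ?thesis by (rule finite_subset)
qed

lemma finite_ShR: "finite (ShR P Q)"
proof -
  have "ShR P Q \<subseteq> (SIGMA k:{..<length P}. {ht P k..<ht Q k})" by (auto simp: ShR_def)
  moreover have "finite (SIGMA k:{..<length P}. {ht P k..<ht Q k})" by auto
  ultimately show ?thesis by (rule finite_subset)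
qed

lemma area_pos:
  assumes S: "(P, Q) \<in> SkFS" shows "0 < area (P, Q)"
proof -
  have l2: "2 \<le> length P" by (rule skfs_len2[OF S])
  have "ht P 1 < ht Q 1" using skfs_ht_lt[OF S, of 1] l2 by simp
  hence "(1, ht P 1) \<in> ShR P Q" using l2 by (simp add: ShR_def)
  hence "card (ShR P Q) > 0" using finite_ShR by (auto simp: card_gt_0_iff)
  thus ?thesis using area_ShR[OF S] by simp
qed

definition Bset :: "step list \<Rightarrow> nat \<times> nat \<times> nat \<Rightarrow> (step list \<times> step list) set" where
  "Bset g = (\<lambda>(p, l, a). {\<psi> \<in> SkFS. lower_border \<psi> = factor g p l \<and> area \<psi> = a})"

lemma finite_Bset: "finite (Bset g oc)"
proof -
  obtain p l a where oc: "oc = (p, l, a)" by (cases oc) auto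
  have "Bset g oc \<subseteq> {factor g p l} \<times> {Q. set Q \<subseteq> (UNIV :: step set) \<and> length Q = length (factor g p l)}"
    using skfs_D(1) by (fastforce simp: Bset_def oc lower_border_def)
  moreover have "finite ({factor g p l} \<times> {Q. set Q \<subseteq> (UNIV :: step set) \<and> length Q = length (factor g p l)})"
    by (intro finite_SigmaI finite.intros finite_lists_length_eq) (simp add: UNIV_step)
  ultimately show ?thesis by (rule finite_subset)
qed

lemma snd_snd_case: "(\<lambda>(p, l, a). a) = (\<lambda>oc :: nat \<times> nat \<times> nat. snd (snd oc))"
  by (auto simp: fun_eq_iff)

lemma sum_a_mset: "(\<Sum>oc\<in>Occ. snd (snd oc)) = sum_mset (image_mset (\<lambda>(p, l, a). a) (mset_set Occ))"
proof -
  have "sum (\<lambda>(p, l, a). a) Occ = sum_mset (image_mset (\<lambda>(p, l, a). a) (mset_set Occ))"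
    by (rule sum_unfold_sum_mset)
  moreover have "sum (\<lambda>(p, l, a). a) Occ = sum (\<lambda>oc. snd (snd oc)) Occ"
    by (rule sum.cong) auto
  ultimately show ?thesis by simp
qed

definition Conf :: "step list \<Rightarrow> nat \<Rightarrow> ((nat \<times> nat \<times> nat) set \<times> (nat \<times> nat \<times> nat \<Rightarrow> step list \<times> step list)) set" where
  "Conf g h = {(Occ, \<phi>). goodconf g Occ \<phi> \<and> \<phi> \<in> extensional Occ \<and> (\<Sum>oc\<in>Occ. snd (snd oc)) = h}"

lemma pdo_unique:
  assumes "Occ \<in> pdo g lam1" "Occ \<in> pdo g lam2" "lam1 \<in> partitions h" "lam2 \<in> partitions h"
  shows "lam1 = lam2"
proof -
  have m: "mset lam1 = mset lam2" using assms(1,2) by (simp add: pdo_def)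
  have s1: "sorted (rev lam1)" and s2: "sorted (rev lam2)"
    using assms(3,4) by (simp_all add: partitions_def sorted_wrt_rev)
  have "sort (rev lam2) = rev lam1" by (rule properties_for_sort) (use m s1 in simp_all)
  moreover have "sort (rev lam2) = rev lam2" using s2 by (simp add: sorted_sort_id)
  ultimately show ?thesis by simp
qed

lemma Sigma_Conf:
  "(SIGMA Occ:(\<Union>lam\<in>partitions h. pdo g lam). PiE Occ (Bset g)) = Conf g h"
proof (intro set_eqI iffI)
  fix x assume x: "x \<in> (SIGMA Occ:(\<Union>lam\<in>partitions h. pdo g lam). PiE Occ (Bset g))"
  then obtain Occ \<phi> lam where xe: "x = (Occ, \<phi>)" and lam: "lam \<in> partitions h" and O: "Occ \<in> pdo g lam"
    and ph: "\<phi> \<in> PiE Occ (Bset g)" by auto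
  have fin: "finite Occ" using O by (simp add: pdo_def)
  have bnd: "\<forall>oc\<in>Occ. fst oc + fst (snd oc) \<le> length g" using O by (auto simp: pdo_def)
  have disj: "\<forall>oc\<in>Occ. \<forall>oc'\<in>Occ. oc \<noteq> oc' \<longrightarrow> fst oc + fst (snd oc) \<le> fst oc' \<or> fst oc' + fst (snd oc') \<le> fst oc"
    using O unfolding pdo_def by fastforce
  have phs: "\<forall>oc\<in>Occ. \<phi> oc \<in> SkFS \<and> fst (\<phi> oc) = factor g (fst oc) (fst (snd oc)) \<and> area (\<phi> oc) = snd (snd oc)"
  proof
    fix oc assume oc: "oc \<in> Occ"
    have "\<phi> oc \<in> Bset g oc" using ph oc by (simp add: PiE_iff)
    thus "\<phi> oc \<in> SkFS \<and> fst (\<phi> oc) = factor g (fst oc) (fst (snd oc)) \<and> area (\<phi> oc) = snd (snd oc)"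
      by (cases oc) (auto simp: Bset_def lower_border_def)
  qed
  have gc: "goodconf g Occ \<phi>" using fin bnd disj phs by (simp add: goodconf_def)
  have ext: "\<phi> \<in> extensional Occ" using ph by (simp add: PiE_iff)
  have "(\<Sum>oc\<in>Occ. snd (snd oc)) = sum_mset (mset lam)"
    using O sum_a_mset[of Occ] by (simp add: pdo_def)
  also have "\<dots> = h" using lam by (simp add: partitions_def sum_mset_sum_list)
  finally show "x \<in> Conf g h" using gc ext xe by (simp add: Conf_def)
next
  fix x assume x: "x \<in> Conf g h"
  then obtain Occ \<phi> where xe: "x = (Occ, \<phi>)" and gc: "goodconf g Occ \<phi>" and ext: "\<phi> \<in> extensional Occ"
    and sh: "(\<Sum>oc\<in>Occ. snd (snd oc)) = h" by (auto simp: Conf_def)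
  let ?M = "image_mset (\<lambda>(p, l, a). a) (mset_set Occ)"
  define lam where "lam = rev (sorted_list_of_multiset ?M)"
  have mlam: "mset lam = ?M" by (simp add: lam_def)
  have fin: "finite Occ" by (rule gc_fin[OF gc])
  have "sum_list lam = h" using sh sum_a_mset[of Occ] mlam
    by (metis sum_mset_sum_list)
  moreover have "sorted_wrt (\<ge>) lam" by (simp add: lam_def sorted_wrt_rev)
  moreover have "0 \<notin> set lam"
  proof
    assume "0 \<in> set lam"
    hence "0 \<in># ?M" using mlam by (metis set_mset_mset)
    then obtain oc where oc: "oc \<in> Occ" and z: "snd (snd oc) = 0"
      using fin unfolding snd_snd_case by auto
    have "0 < area (\<phi> oc)" using area_pos[of "fst (\<phi> oc)" "snd (\<phi> oc)"] gc_sk[OF gc oc] by simp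
    thus False using gc_area[OF gc oc] z by simp
  qed
  ultimately have lamp: "lam \<in> partitions h" by (simp add: partitions_def)
  have "Occ \<in> pdo g lam"
  proof -
    have "\<forall>(p, l, a)\<in>Occ. p + l \<le> length g" using gc_bound[OF gc] by fastforce
    moreover have "\<forall>(p, l, a)\<in>Occ. \<forall>(p', l', a')\<in>Occ. (p, l, a) \<noteq> (p', l', a') \<longrightarrow> p + l \<le> p' \<or> p' + l' \<le> p"
      using gc_disj[OF gc] by fastforce
    moreover have "\<forall>(p, l, a)\<in>Occ. \<exists>\<phi>\<in>SkFS. area \<phi> = a \<and> lower_border \<phi> = factor g p l"
    proof
      fix oc assume oc: "oc \<in> Occ"
      obtain p l a where pla: "oc = (p, l, a)" by (cases oc) auto
      show "case oc of (p, l, a) \<Rightarrow> \<exists>\<phi>\<in>SkFS. area \<phi> = a \<and> lower_border \<phi> = factor g p l"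
        using gc_sk[OF gc oc] gc_area[OF gc oc] gc_lb[OF gc oc] pla by (auto simp: lower_border_def)
    qed
    ultimately show ?thesis using fin mlam by (simp add: pdo_def)
  qed
  moreover have "\<phi> \<in> PiE Occ (Bset g)"
  proof -
    have "\<forall>oc\<in>Occ. \<phi> oc \<in> Bset g oc"
    proof
      fix oc assume oc: "oc \<in> Occ"
      obtain p l a where pla: "oc = (p, l, a)" by (cases oc) auto
      show "\<phi> oc \<in> Bset g oc"
        using gc_sk[OF gc oc] gc_area[OF gc oc] gc_lb[OF gc oc] pla by (simp add: Bset_def lower_border_def)
    qed
    thus ?thesis using ext by (simp add: PiE_iff)
  qed
  ultimately show "x \<in> (SIGMA Occ:(\<Union>lam\<in>partitions h. pdo g lam). PiE Occ (Bset g))"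
    using xe lamp by blast
qed

lemma finite_pdo: "finite (pdo g lam)"
proof -
  have "pdo g lam \<subseteq> Pow ({..length g} \<times> {..length g} \<times> set lam)"
  proof
    fix Occ assume O: "Occ \<in> pdo g lam"
    have fin: "finite Occ" using O by (simp add: pdo_def)
    have m: "image_mset (\<lambda>(p, l, a). a) (mset_set Occ) = mset lam" using O by (simp add: pdo_def)
    have "\<forall>oc\<in>Occ. snd (snd oc) \<in> set lam"
    proof
      fix oc assume oc: "oc \<in> Occ"
      have "snd (snd oc) \<in># image_mset (\<lambda>oc. snd (snd oc)) (mset_set Occ)" using oc fin by auto
      thus "snd (snd oc) \<in> set lam" using m unfolding snd_snd_case by (metis set_mset_mset)
    qed
    moreover have "\<forall>oc\<in>Occ. fst oc + fst (snd oc) \<le> length g" using O by (auto simp: pdo_def)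
    ultimately show "Occ \<in> Pow ({..length g} \<times> {..length g} \<times> set lam)" by fastforce
  qed
  thus ?thesis by (rule finite_subset) simp
qed

lemma rhs_g:
  assumes g: "g \<in> dyck n"
  shows "(\<Sum>lam \<in> partitions h. \<Sum>Occ \<in> pdo g lam.
       \<Sum>\<phi> \<in> PiE Occ (\<lambda>(p, l, a). {\<psi> \<in> SkFS. lower_border \<psi> = factor g p l \<and> area \<psi> = a}).
         multinomial h (\<lambda>oc. area (\<phi> oc)) Occ * (\<Prod>oc \<in> Occ. t (\<phi> oc)))
    = (\<Sum>g'\<in>{g' \<in> dyck n. dyck_le g g' \<and> card (region g g') = h}. E g g')"
proof -
  let ?F = "\<lambda>Occ \<phi>. multinomial h (\<lambda>oc. area (\<phi> oc)) Occ * (\<Prod>oc \<in> Occ. t (\<phi> oc))"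
  let ?U = "\<Union>lam\<in>partitions h. pdo g lam"
  have Beq: "(\<lambda>(p, l, a). {\<psi> \<in> SkFS. lower_border \<psi> = factor g p l \<and> area \<psi> = a}) = Bset g"
    by (simp add: Bset_def)
  have "(\<Sum>lam \<in> partitions h. \<Sum>Occ \<in> pdo g lam. \<Sum>\<phi> \<in> PiE Occ (Bset g). ?F Occ \<phi>)
      = (\<Sum>Occ \<in> ?U. \<Sum>\<phi> \<in> PiE Occ (Bset g). ?F Occ \<phi>)"
  proof (rule sum.UNION_disjoint[symmetric])
    show "finite (partitions h)" by (rule finite_partitions)
    show "\<forall>i\<in>partitions h. finite (pdo g i)" using finite_pdo by blast
    show "\<forall>i\<in>partitions h. \<forall>j\<in>partitions h. i \<noteq> j \<longrightarrow> pdo g i \<inter> pdo g j = {}"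
      using pdo_unique by blast
  qed
  also have "\<dots> = (\<Sum>(Occ, \<phi>) \<in> (SIGMA Occ:?U. PiE Occ (Bset g)). ?F Occ \<phi>)"
  proof (rule sum.Sigma)
    show "finite ?U" using finite_partitions finite_pdo by blast
    show "\<forall>Occ\<in>?U. finite (PiE Occ (Bset g))"
      using finite_pdo finite_Bset by (auto intro!: finite_PiE simp: pdo_def)
  qed
  also have "\<dots> = (\<Sum>(Occ, \<phi>) \<in> Conf g h. ?F Occ \<phi>)" unfolding Sigma_Conf ..
  also have "\<dots> = (\<Sum>(Occ, \<phi>) \<in> Conf g h. E g (Phi g Occ \<phi>))"
  proof (rule sum.cong[OF refl])
    fix x assume x: "x \<in> Conf g h"
    then obtain Occ \<phi> where xe: "x = (Occ, \<phi>)" and gc: "goodconf g Occ \<phi>"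
      and sh: "(\<Sum>oc\<in>Occ. snd (snd oc)) = h" by (auto simp: Conf_def)
    have "(\<Sum>oc\<in>Occ. area (\<phi> oc)) = h" using sh gc_area[OF gc] by simp
    thus "(case x of (Occ, \<phi>) \<Rightarrow> ?F Occ \<phi>) = (case x of (Occ, \<phi>) \<Rightarrow> E g (Phi g Occ \<phi>))"
      using E_Phi[OF gc] xe by simp
  qed
  also have "\<dots> = (\<Sum>g'\<in>{g' \<in> dyck n. dyck_le g g' \<and> card (region g g') = h}. E g g')"
  proof -
    have bij: "bij_betw (\<lambda>x. Phi g (fst x) (snd x)) (Conf g h) {g' \<in> dyck n. dyck_le g g' \<and> card (region g g') = h}"
    proof (rule bij_betw_imageI)
      show "inj_on (\<lambda>x. Phi g (fst x) (snd x)) (Conf g h)"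
      proof (rule inj_onI)
        fix x y assume x: "x \<in> Conf g h" and y: "y \<in> Conf g h"
          and eq: "Phi g (fst x) (snd x) = Phi g (fst y) (snd y)"
        have c1: "goodconf g (fst x) (snd x)" "snd x \<in> extensional (fst x)"
          using x by (auto simp: Conf_def split: prod.splits)
        have c2: "goodconf g (fst y) (snd y)" "snd y \<in> extensional (fst y)"
          using y by (auto simp: Conf_def split: prod.splits)
        have "fst x = fst y \<and> snd x = snd y"
          by (rule Phi_inj[OF c1(1) c2(1) c1(2) c2(2) eq])
        thus "x = y" by (simp add: prod_eq_iff)
      qed
      show "(\<lambda>x. Phi g (fst x) (snd x)) ` Conf g h = {g' \<in> dyck n. dyck_le g g' \<and> card (region g g') = h}"
      proof
        show "(\<lambda>x. Phi g (fst x) (snd x)) ` Conf g h \<subseteq> {g' \<in> dyck n. dyck_le g g' \<and> card (region g g') = h}"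
        proof
          fix z assume "z \<in> (\<lambda>x. Phi g (fst x) (snd x)) ` Conf g h"
          then obtain Occ \<phi> where z: "z = Phi g Occ \<phi>" and gc: "goodconf g Occ \<phi>"
            and sh: "(\<Sum>oc\<in>Occ. snd (snd oc)) = h" by (auto simp: Conf_def)
          have "card (region g z) = h" using card_region_Phi[OF gc] sh gc_area[OF gc] z by simp
          thus "z \<in> {g' \<in> dyck n. dyck_le g g' \<and> card (region g g') = h}"
            using Phi_dyck[OF gc g] Phi_le[OF gc] z by simp
        qed
        show "{g' \<in> dyck n. dyck_le g g' \<and> card (region g g') = h} \<subseteq> (\<lambda>x. Phi g (fst x) (snd x)) ` Conf g h"
        proof
          fix g' assume g': "g' \<in> {g' \<in> dyck n. dyck_le g g' \<and> card (region g g') = h}"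
          have g'd: "g' \<in> dyck n" and le: "dyck_le g g'" and ch: "card (region g g') = h" using g' by auto
          have gc: "goodconf g (OccR g g') (phiR g g')" by (rule goodconf_R[OF g g'd le])
          have PR: "Phi g (OccR g g') (phiR g g') = g'" by (rule Phi_R[OF g g'd le])
          have "(\<Sum>oc\<in>OccR g g'. snd (snd oc)) = (\<Sum>oc\<in>OccR g g'. area (phiR g g' oc))"
            using gc_area[OF gc] by simp
          also have "\<dots> = h" using card_region_Phi[OF gc] PR ch by simp
          finally have "(OccR g g', phiR g g') \<in> Conf g h"
            using gc phiR_ext[OF g g'd le] by (simp add: Conf_def)
          thus "g' \<in> (\<lambda>x. Phi g (fst x) (snd x)) ` Conf g h"
            by (rule image_eqI[rotated]) (simp add: PR)
        qed
      qed
    qed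
    have "(\<Sum>x\<in>Conf g h. E g (Phi g (fst x) (snd x))) = sum (E g) {g' \<in> dyck n. dyck_le g g' \<and> card (region g g') = h}"
      by (rule sum.reindex_bij_betw[OF bij])
    thus ?thesis by (simp add: split_beta)
  qed
  finally show ?thesis unfolding Beq .
qed

theorem mainTheorem1:
  fixes n h :: nat
  assumes "h \<ge> 1"
  shows "sc h n =
    (\<Sum>\<gamma> \<in> dyck n. \<Sum>lam \<in> partitions h. \<Sum>Occ \<in> pdo \<gamma> lam.
       \<Sum>\<phi> \<in> PiE Occ (\<lambda>(p, l, a). {\<psi> \<in> SkFS. lower_border \<psi> = factor \<gamma> p l \<and> area \<psi> = a}).
         multinomial h (\<lambda>oc. area (\<phi> oc)) Occ * (\<Prod>oc \<in> Occ. t (\<phi> oc)))"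
proof -
  have "sc h n = (\<Sum>g\<in>dyck n. \<Sum>g'\<in>dyck n. if dyck_le g g' \<and> card (region g g') = h then E g g' else 0)"
    by (rule lhs_formula)
  also have "\<dots> = (\<Sum>g\<in>dyck n. \<Sum>g'\<in>{g' \<in> dyck n. dyck_le g g' \<and> card (region g g') = h}. E g g')"
    by (rule sum.cong[OF refl]) (simp add: sum.inter_filter[OF finite_dyck])
  also have "\<dots> = (\<Sum>\<gamma> \<in> dyck n. \<Sum>lam \<in> partitions h. \<Sum>Occ \<in> pdo \<gamma> lam.
       \<Sum>\<phi> \<in> PiE Occ (\<lambda>(p, l, a). {\<psi> \<in> SkFS. lower_border \<psi> = factor \<gamma> p l \<and> area \<psi> = a}).
         multinomial h (\<lambda>oc. area (\<phi> oc)) Occ * (\<Prod>oc \<in> Occ. t (\<phi> oc)))"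
    by (rule sum.cong[OF refl]) (rule rhs_g[symmetric])
  finally show ?thesis .
qed


end
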